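(* Let $G$ be a connected graph of order at least two. (a) For $n\ge 3$, $O_{\rm SR}(G\,\square\,K_n)=\mathcal{B}$. (b) For $n\ge 3$, $O_{\rm SR}(G\,\square\,C_n)=\mathcal{M}$ if $n$ is even and $\Delta(G_{\rm SR})=1$, and $O_{\rm SR}(G\,\square\,C_n)=\mathcal{B}$ if $n$ is odd or $\Delta(G_{\rm SR})\ge 2$. (c) For any tree $T$ that is not a path, $O_{\rm SR}(G\,\square\,T)=\mathcal{B}$.
   Context: All graphs are finite, simple and undirected; $d(x,y)$ is the shortest-path distance; $\Delta$ denotes maximum degree; $K_n,C_n$ denote complete graph and cycle on $n$ vertices. The Cartesian product $G\,\square\,H$ has vertex set $V(G)\times V(H)$, with $(u,w)$ adjacent to $(u',w')$ iff either $u=u'$ and $ww'\in E(H)$, or $w=w'$ and $uu'\in E(G)$. A set $S\subseteq V(X)$ is a strong resolving set of a connected graph $X$ if for all distinct $x,y\in V(X)$ there exists $z\in S$ such that $x$ lies on a $y$–$z$ geodesic or $y$ lies on an $x$–$z$ geodesic. A vertex $u$ is maximally distant from $v$ if $d(u,v)\ge d(w,v)$ for every neighbor $w$ of $u$; $u,v$ are mutually maximally distant (MMD) if each is maximally distant from the other. The strong resolving graph $X_{\rm SR}$ has vertex set $\{x: x\text{ is MMD with some }y\}$ and edges exactly the MMD pairs. The Maker–Breaker strong resolving game on $X$: Maker and Breaker alternately select a not-yet-chosen vertex of $X$; Maker wins if the vertices he selects contain a strong resolving set of $X$, Breaker wins otherwise. In the M-game Maker moves first, in the B-game Breaker moves first.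 $O_{\rm SR}(X)=\mathcal{M}$ if Maker has a winning strategy in both games, $\mathcal{B}$ if Breaker has a winning strategy in both, and $\mathcal{N}$ if the first player has a winning strategy in each. *)

theory Defs
  imports Main
begin

type_synonym 'a graph = "'a set \<times> ('a \<Rightarrow> 'a \<Rightarrow> bool)"

definition verts :: "'a graph \<Rightarrow> 'a set" where "verts G = fst G"
definition adj :: "'a graph \<Rightarrow> 'a \<Rightarrow> 'a \<Rightarrow> bool" where "adj G = snd G"

definition graph :: "'a graph \<Rightarrow> bool" where
  "graph G \<longleftrightarrow> finite (verts G)
     \<and> (\<forall>x y. adj G x y \<longrightarrow> x \<in> verts G \<and> y \<in> verts G)
     \<and> (\<forall>x y. adj G x y \<longrightarrow> adj G y x)
     \<and> (\<forall>x. \<not> adj G x x)"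

definition is_walk :: "'a graph \<Rightarrow> 'a list \<Rightarrow> bool" where
  "is_walk G xs \<longleftrightarrow> xs \<noteq> [] \<and> set xs \<subseteq> verts G
     \<and> (\<forall>i. Suc i < length xs \<longrightarrow> adj G (xs ! i) (xs ! Suc i))"

definition dist :: "'a graph \<Rightarrow> 'a \<Rightarrow> 'a \<Rightarrow> nat" where
  "dist G x y = (LEAST n. \<exists>xs. is_walk G xs \<and> hd xs = x \<and> last xs = y \<and> length xs = Suc n)"

definition connected :: "'a graph \<Rightarrow> bool" where
  "connected G \<longleftrightarrow> verts G \<noteq> {} \<and>
     (\<forall>x\<in>verts G. \<forall>y\<in>verts G. \<exists>xs. is_walk G xs \<and> hd xs = x \<and> last xs = y)"

definition max_degree :: "'a graph \<Rightarrow> nat" where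
  "max_degree G = Max ((\<lambda>x. card {y \<in> verts G. adj G x y}) ` verts G)"

definition cart_prod :: "'a graph \<Rightarrow> 'b graph \<Rightarrow> ('a \<times> 'b) graph" (infixr "\<box>" 80) where
  "G \<box> H = (verts G \<times> verts H,
     (\<lambda>(u, w) (u', w'). (u = u' \<and> adj H w w') \<or> (w = w' \<and> adj G u u')))"

definition complete_graph :: "nat \<Rightarrow> nat graph" ("K") where
  "K n = ({0..<n}, (\<lambda>x y. x \<noteq> y))"

definition cycle_graph :: "nat \<Rightarrow> nat graph" ("C") where
  "C n = ({0..<n}, (\<lambda>x y. (x + 1) mod n = y \<or> (y + 1) mod n = x))"

definition geodesic :: "'a graph \<Rightarrow> 'a \<Rightarrow> 'a \<Rightarrow> 'a list \<Rightarrow> bool" where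
  "geodesic G y z p \<longleftrightarrow> is_walk G p \<and> hd p = y \<and> last p = z \<and> length p = Suc (dist G y z)"

definition on_geodesic :: "'a graph \<Rightarrow> 'a \<Rightarrow> 'a \<Rightarrow> 'a \<Rightarrow> bool" where
  "on_geodesic G x y z \<longleftrightarrow> (\<exists>p. geodesic G y z p \<and> x \<in> set p)"

definition strong_resolving_set :: "'a graph \<Rightarrow> 'a set \<Rightarrow> bool" where
  "strong_resolving_set G S \<longleftrightarrow> S \<subseteq> verts G \<and>
     (\<forall>x\<in>verts G. \<forall>y\<in>verts G. x \<noteq> y \<longrightarrow>
        (\<exists>z\<in>S. on_geodesic G x y z \<or> on_geodesic G y x z))"

definition maximally_distant :: "'a graph \<Rightarrow> 'a \<Rightarrow> 'a \<Rightarrow> bool" where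
  "maximally_distant G u v \<longleftrightarrow> (\<forall>w. adj G u w \<longrightarrow> dist G w v \<le> dist G u v)"

definition MMD :: "'a graph \<Rightarrow> 'a \<Rightarrow> 'a \<Rightarrow> bool" where
  "MMD G u v \<longleftrightarrow> u \<in> verts G \<and> v \<in> verts G \<and> u \<noteq> v
     \<and> maximally_distant G u v \<and> maximally_distant G v u"

definition strong_resolving_graph :: "'a graph \<Rightarrow> 'a graph" where
  "strong_resolving_graph G = ({x \<in> verts G. \<exists>y. MMD G x y}, MMD G)"

definition has_cycle :: "'a graph \<Rightarrow> bool" where
  "has_cycle G \<longleftrightarrow> (\<exists>xs. length xs \<ge> 3 \<and> distinct xs \<and> is_walk G xs \<and> adj G (last xs) (hd xs))"

definition tree :: "'a graph \<Rightarrow> bool" where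
  "tree T \<longleftrightarrow> graph T \<and> connected T \<and> \<not> has_cycle T"

definition path_graph :: "'a graph \<Rightarrow> bool" where
  "path_graph T \<longleftrightarrow> (\<exists>f. bij_betw f {0..<card (verts T)} (verts T) \<and>
     (\<forall>i<card (verts T). \<forall>j<card (verts T). adj T (f i) (f j) \<longleftrightarrow> (i = Suc j \<or> j = Suc i)))"

text \<open>A position is (M, B): the vertices
  chosen so far by Maker and by Breaker; the boolean says whether Maker is to move. \<close>

definition free :: "'a graph \<Rightarrow> 'a set \<Rightarrow> 'a set \<Rightarrow> 'a set" where
  "free G M B = verts G - (M \<union> B)"

definition maker_goal :: "'a graph \<Rightarrow> 'a set \<Rightarrow> bool" where
  "maker_goal G M \<longleftrightarrow> (\<exists>S\<subseteq>M. strong_resolving_set G S)"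

inductive maker_wins :: "'a graph \<Rightarrow> bool \<Rightarrow> 'a set \<Rightarrow> 'a set \<Rightarrow> bool" for G where
  mw_end: "free G M B = {} \<Longrightarrow> maker_goal G M \<Longrightarrow> maker_wins G t M B"
| mw_maker: "v \<in> free G M B \<Longrightarrow> maker_wins G False (insert v M) B \<Longrightarrow> maker_wins G True M B"
| mw_breaker: "free G M B \<noteq> {} \<Longrightarrow> (\<forall>v\<in>free G M B. maker_wins G True M (insert v B))
     \<Longrightarrow> maker_wins G False M B"

inductive breaker_wins :: "'a graph \<Rightarrow> bool \<Rightarrow> 'a set \<Rightarrow> 'a set \<Rightarrow> bool" for G where
  bw_end: "free G M B = {} \<Longrightarrow> \<not> maker_goal G M \<Longrightarrow> breaker_wins G t M B"
| bw_breaker: "v \<in> free G M B \<Longrightarrow> breaker_wins G True M (insert v B) \<Longrightarrow> breaker_wins G False M B"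
| bw_maker: "free G M B \<noteq> {} \<Longrightarrow> (\<forall>v\<in>free G M B. breaker_wins G False (insert v M) B)
     \<Longrightarrow> breaker_wins G True M B"

datatype outcome = Omaker | Obreaker | Onext

text \<open>M-game: Maker starts (True); B-game: Breaker starts (False).\<close>
definition O_SR :: "'a graph \<Rightarrow> outcome" where
  "O_SR X = (if maker_wins X True {} {} \<and> maker_wins X False {} {} then Omaker
     else if breaker_wins X True {} {} \<and> breaker_wins X False {} {} then Obreaker
     else if maker_wins X True {} {} \<and> breaker_wins X False {} {} then Onext
     else undefined)"

end

theory Submission
  imports Defs
begin

definition symadj :: "'a graph \<Rightarrow> bool" where
  "symadj G \<longleftrightarrow> (\<forall>x\<in>verts G. \<forall>y\<in>verts G. adj G x y \<longrightarrow> adj G y x)"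

definition is_dist :: "'a graph \<Rightarrow> ('a \<Rightarrow> 'a \<Rightarrow> nat) \<Rightarrow> bool" where
  "is_dist G f \<longleftrightarrow> (\<forall>y\<in>verts G. f y y = 0)
    \<and> (\<forall>x\<in>verts G. \<forall>y\<in>verts G. x \<noteq> y \<longrightarrow> (\<exists>x'\<in>verts G. adj G x x' \<and> f x y = Suc (f x' y)))
    \<and> (\<forall>x\<in>verts G. \<forall>x'\<in>verts G. \<forall>y\<in>verts G. adj G x x' \<longrightarrow> f x y \<le> Suc (f x' y))"

lemma is_dist_D1: "is_dist G f \<Longrightarrow> y \<in> verts G \<Longrightarrow> f y y = 0"
  by (simp add: is_dist_def)
lemma is_dist_D2: "is_dist G f \<Longrightarrow> x \<in> verts G \<Longrightarrow> y \<in> verts G \<Longrightarrow> x \<noteq> y \<Longrightarrow>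
   \<exists>x'\<in>verts G. adj G x x' \<and> f x y = Suc (f x' y)"
  unfolding is_dist_def by blast
lemma is_dist_D3: "is_dist G f \<Longrightarrow> x \<in> verts G \<Longrightarrow> x' \<in> verts G \<Longrightarrow> y \<in> verts G \<Longrightarrow> adj G x x' \<Longrightarrow>
   f x y \<le> Suc (f x' y)"
  unfolding is_dist_def by blast

lemma is_walk_ne: "is_walk G xs \<Longrightarrow> xs \<noteq> []"
  by (simp add: is_walk_def)

lemma is_walk_single[simp]: "is_walk G [x] \<longleftrightarrow> x \<in> verts G"
  by (simp add: is_walk_def)

lemma is_walk_Cons2: "is_walk G (x # y # ys) \<longleftrightarrow> x \<in> verts G \<and> adj G x y \<and> is_walk G (y # ys)"
proof
  assume h: "is_walk G (x # y # ys)"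
  have hh: "\<forall>i. Suc i < length (x # y # ys) \<longrightarrow> adj G ((x # y # ys) ! i) ((x # y # ys) ! Suc i)"
    using h unfolding is_walk_def by blast
  have "adj G ((x # y # ys) ! 0) ((x # y # ys) ! Suc 0)" using hh[rule_format, of 0] by simp
  then have "adj G x y" by simp
  moreover have "adj G ((y # ys) ! i) ((y # ys) ! Suc i)" if "Suc i < length (y # ys)" for i
  proof -
    have "adj G ((x # y # ys) ! Suc i) ((x # y # ys) ! Suc (Suc i))" using hh[rule_format, of "Suc i"] that by simp
    then show ?thesis by simp
  qed
  ultimately show "x \<in> verts G \<and> adj G x y \<and> is_walk G (y # ys)" using h by (simp add: is_walk_def)
next
  assume h: "x \<in> verts G \<and> adj G x y \<and> is_walk G (y # ys)"
  show "is_walk G (x # y # ys)" unfolding is_walk_def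
  proof (intro conjI allI impI)
    show "set (x # y # ys) \<subseteq> verts G" using h by (auto simp: is_walk_def)
  next
    fix i assume i: "Suc i < length (x # y # ys)"
    show "adj G ((x # y # ys) ! i) ((x # y # ys) ! Suc i)"
    proof (cases i)
      case 0 then show ?thesis using h by simp
    next
      case (Suc j)
      then have "Suc j < length (y # ys)" using i by simp
      then have "adj G ((y # ys) ! j) ((y # ys) ! Suc j)" using h unfolding is_walk_def by blast
      then show ?thesis using Suc by simp
    qed
  qed simp
qed

lemma is_walk_Cons: "is_walk G (x # xs) \<longleftrightarrow> x \<in> verts G \<and> (xs = [] \<or> (adj G x (hd xs) \<and> is_walk G xs))"
  by (cases xs) (auto simp: is_walk_Cons2)

lemma is_walk_append: "is_walk G xs \<Longrightarrow> is_walk G ys \<Longrightarrow> adj G (last xs) (hd ys) \<Longrightarrow> is_walk G (xs @ ys)"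
proof (induction xs)
  case Nil then show ?case by (simp add: is_walk_def)
next
  case (Cons x xs)
  have "ys \<noteq> []" using Cons.prems(2) by (simp add: is_walk_def)
  show ?case
  proof (cases "xs = []")
    case True then show ?thesis using Cons \<open>ys \<noteq> []\<close> by (simp add: is_walk_Cons)
  next
    case False
    then show ?thesis using Cons by (simp add: is_walk_Cons)
  qed
qed

lemma is_walk_rev: "symadj G \<Longrightarrow> is_walk G xs \<Longrightarrow> is_walk G (rev xs)"
proof (induction xs)
  case Nil then show ?case by (simp add: is_walk_def)
next
  case (Cons x xs)
  show ?case
  proof (cases "xs = []")
    case True then show ?thesis using Cons by simp
  next
    case False
    then have "is_walk G xs" "adj G x (hd xs)" "x \<in> verts G" using Cons.prems by (auto simp: is_walk_Cons)
    moreover have "hd xs \<in> verts G" using \<open>is_walk G xs\<close> False by (auto simp: is_walk_def)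
    ultimately show ?thesis using Cons False
      by (auto intro!: is_walk_append simp: last_rev symadj_def)
  qed
qed

lemma is_walk_take: "is_walk G xs \<Longrightarrow> 0 < k \<Longrightarrow> is_walk G (take k xs)"
  unfolding is_walk_def using set_take_subset[of k xs] by auto

lemma is_walk_drop: "is_walk G xs \<Longrightarrow> k < length xs \<Longrightarrow> is_walk G (drop k xs)"
  unfolding is_walk_def using set_drop_subset[of k xs] by auto

lemma dist_le: "is_walk G xs \<Longrightarrow> hd xs = x \<Longrightarrow> last xs = y \<Longrightarrow> dist G x y \<le> length xs - 1"
  unfolding dist_def
  by (rule Least_le) (auto simp: is_walk_def)

lemma walk_exists:
  assumes d: "is_dist G f" and "x \<in> verts G" "y \<in> verts G"
  shows "\<exists>xs. is_walk G xs \<and> hd xs = x \<and> last xs = y \<and> length xs = Suc (f x y)"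
  using assms(2)
proof (induction "f x y" arbitrary: x)
  case 0
  then have "x = y" using is_dist_D2[OF d _ assms(3)] by fastforce
  then show ?case using 0 by (intro exI[of _ "[x]"]) simp
next
  case (Suc n)
  then have "x \<noteq> y" using is_dist_D1[OF d assms(3)] by auto
  then obtain x' where x': "x' \<in> verts G" "adj G x x'" "f x y = Suc (f x' y)"
    using is_dist_D2[OF d Suc.prems assms(3)] by blast
  then obtain xs where xs: "is_walk G xs" "hd xs = x'" "last xs = y" "length xs = Suc (f x' y)"
    using Suc by auto
  then have "xs \<noteq> []" by (auto simp: is_walk_def)
  then show ?case using xs x' Suc.prems
    by (intro exI[of _ "x # xs"]) (auto simp: is_walk_Cons)
qed

lemma walk_lower:
  assumes d: "is_dist G f"
  shows "is_walk G xs \<Longrightarrow> last xs = y \<Longrightarrow> f (hd xs) y \<le> length xs - 1"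
proof (induction xs)
  case Nil then show ?case by (simp add: is_walk_def)
next
  case (Cons x xs)
  show ?case
  proof (cases "xs = []")
    case True then show ?thesis using Cons is_dist_D1[OF d, of x] by (simp add: is_walk_def)
  next
    case False
    then have w: "is_walk G xs" "adj G x (hd xs)" "x \<in> verts G" using Cons.prems by (auto simp: is_walk_Cons)
    have "hd xs \<in> verts G" "y \<in> verts G" using w(1) False Cons.prems(2) by (auto simp: is_walk_def)
    then have "f x y \<le> Suc (f (hd xs) y)" using is_dist_D3[OF d w(3)] w(2) by blast
    moreover have "f (hd xs) y \<le> length xs - 1" using Cons False w by auto
    ultimately show ?thesis using False by (cases xs) auto
  qed
qed

lemma dist_eq:
  assumes d: "is_dist G f" and "x \<in> verts G" "y \<in> verts G"
  shows "dist G x y = f x y"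
  unfolding dist_def
proof (rule Least_equality)
  show "\<exists>xs. is_walk G xs \<and> hd xs = x \<and> last xs = y \<and> length xs = Suc (f x y)"
    using walk_exists[OF assms] .
next
  fix n assume "\<exists>xs. is_walk G xs \<and> hd xs = x \<and> last xs = y \<and> length xs = Suc n"
  then obtain xs where "is_walk G xs" "hd xs = x" "last xs = y" "length xs = Suc n" by blast
  then show "f x y \<le> n" using walk_lower[OF d] by fastforce
qed

lemma is_dist_dist:
  assumes d: "is_dist G f" shows "is_dist G (dist G)"
proof -
  have e: "\<And>x y. x \<in> verts G \<Longrightarrow> y \<in> verts G \<Longrightarrow> dist G x y = f x y" using dist_eq[OF d] by blast
  show ?thesis using d unfolding is_dist_def
    by (metis (no_types, lifting) e)
qed

lemma connected_walks: assumes c: "connected G" shows "\<forall>x\<in>verts G. \<forall>y\<in>verts G. \<exists>xs. is_walk G xs \<and> hd xs = x \<and> last xs = y"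
      using c unfolding connected_def by (elim conjE)

lemma dist_walk: assumes c: "connected G" and "x \<in> verts G" "y \<in> verts G"
  shows "\<exists>xs. is_walk G xs \<and> hd xs = x \<and> last xs = y \<and> length xs = Suc (dist G x y)"
proof -
    obtain xs where xs: "is_walk G xs" "hd xs = x" "last xs = y" using connected_walks[OF c] assms(2,3) by blast
    then have "length xs = Suc (length xs - 1)" using is_walk_ne[OF xs(1)] by (cases xs) auto
    then have "\<exists>n xs. is_walk G xs \<and> hd xs = x \<and> last xs = y \<and> length xs = Suc n"
      using xs by blast
    then show ?thesis unfolding dist_def by (rule LeastI_ex)
qed

lemma dist_P3: assumes c: "connected G" and a: "x \<in> verts G" "x' \<in> verts G" "y \<in> verts G" "adj G x x'"
  shows "dist G x y \<le> Suc (dist G x' y)"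
  proof -
    obtain xs where xs: "is_walk G xs" "hd xs = x'" "last xs = y" "length xs = Suc (dist G x' y)"
      using dist_walk[OF c a(2,3)] by blast
    then have "xs \<noteq> []" by (auto simp: is_walk_def)
    then have "is_walk G (x # xs)" using xs a by (auto simp: is_walk_Cons)
    then show ?thesis using dist_le[of G "x # xs" x y] xs \<open>xs \<noteq> []\<close> by auto
  qed

lemma connected_is_dist:
  assumes c: "connected G"
  shows "is_dist G (dist G)"
proof -
  note ex = dist_walk[OF c]
  note P3 = dist_P3[OF c]
  show ?thesis unfolding is_dist_def
  proof (intro conjI ballI impI allI)
    fix y assume "y \<in> verts G"
    then show "dist G y y = 0" using dist_le[of G "[y]" y y] by simp
  next
    fix x y assume xy: "x \<in> verts G" "y \<in> verts G" "x \<noteq> y"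
    obtain xs where xs: "is_walk G xs" "hd xs = x" "last xs = y" "length xs = Suc (dist G x y)"
      using ex xy by blast
    have "xs \<noteq> []" using xs(1) by (rule is_walk_ne)
    then obtain rest0 where r0: "xs = x # rest0" using xs(2) by (cases xs) auto
    then have "rest0 \<noteq> []" using xs(3) xy(3) by auto
    then obtain x' rest where xs_eq: "xs = x # x' # rest" using r0 by (cases rest0) auto
    then have w: "adj G x x'" "is_walk G (x' # rest)" using xs(1) by (auto simp: is_walk_Cons2)
    then have x'v: "x' \<in> verts G" by (auto simp: is_walk_def)
    have "dist G x' y \<le> length (x' # rest) - 1" using dist_le[OF w(2), of x' y] xs xs_eq by simp
    moreover have "dist G x y \<le> Suc (dist G x' y)" using P3 xy x'v w by blast
    ultimately have "dist G x y = Suc (dist G x' y)" using xs(4) xs_eq by simp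
    then show "\<exists>x'\<in>verts G. adj G x x' \<and> dist G x y = Suc (dist G x' y)" using w x'v by blast
  next
    fix x x' y assume "x \<in> verts G" "x' \<in> verts G" "y \<in> verts G" "adj G x x'"
    then show "dist G x y \<le> Suc (dist G x' y)" using P3 by blast
  qed
qed



lemma last_take_Suc: "k < length p \<Longrightarrow> last (take (Suc k) p) = p ! k"
  by (simp add: take_Suc_conv_app_nth)

definition md :: "'a graph \<Rightarrow> 'a \<Rightarrow> 'a \<Rightarrow> bool" where
  "md G u v \<longleftrightarrow> (\<forall>w\<in>verts G. adj G u w \<longrightarrow> dist G w v \<le> dist G u v)"

definition mmd :: "'a graph \<Rightarrow> 'a \<Rightarrow> 'a \<Rightarrow> bool" where
  "mmd G u v \<longleftrightarrow> u \<in> verts G \<and> v \<in> verts G \<and> u \<noteq> v \<and> md G u v \<and> md G v u"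

lemma mmd_sym: "mmd G u v \<Longrightarrow> mmd G v u"
  by (auto simp: mmd_def)

locale mg =
  fixes G :: "'a graph"
  assumes d: "is_dist G (dist G)" and s: "symadj G"
begin

abbreviation "V \<equiv> verts G"
abbreviation "D \<equiv> dist G"

lemma D0[simp]: "y \<in> V \<Longrightarrow> D y y = 0" using is_dist_D1[OF d] .

lemma Dstep: "x \<in> V \<Longrightarrow> y \<in> V \<Longrightarrow> x \<noteq> y \<Longrightarrow> \<exists>x'\<in>V. adj G x x' \<and> D x y = Suc (D x' y)"
  using is_dist_D2[OF d] .

lemma Dadj: "x \<in> V \<Longrightarrow> x' \<in> V \<Longrightarrow> y \<in> V \<Longrightarrow> adj G x x' \<Longrightarrow> D x y \<le> Suc (D x' y)"
  using is_dist_D3[OF d] .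

lemma Dz: "x \<in> V \<Longrightarrow> y \<in> V \<Longrightarrow> D x y = 0 \<longleftrightarrow> x = y"
  using Dstep by fastforce

lemma tri: "x \<in> V \<Longrightarrow> y \<in> V \<Longrightarrow> z \<in> V \<Longrightarrow> D x z \<le> D x y + D y z"
proof (induction "D x y" arbitrary: x)
  case 0 then show ?case using Dz by auto
next
  case (Suc n)
  then have "x \<noteq> y" by auto
  then obtain x' where x': "x' \<in> V" "adj G x x'" "D x y = Suc (D x' y)" using Dstep Suc.prems by blast
  then have "D x' z \<le> D x' y + D y z" using Suc by auto
  moreover have "D x z \<le> Suc (D x' z)" using Dadj x' Suc.prems by blast
  ultimately show ?case using x' by linarith
qed

lemma adj1: "x \<in> V \<Longrightarrow> x' \<in> V \<Longrightarrow> adj G x x' \<Longrightarrow> D x x' \<le> 1"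
  using Dadj[of x x' x'] by simp

lemma sym_le: "x \<in> V \<Longrightarrow> y \<in> V \<Longrightarrow> D y x \<le> D x y"
proof (induction "D x y" arbitrary: x)
  case 0 then show ?case using Dz by auto
next
  case (Suc n)
  then have "x \<noteq> y" by auto
  then obtain x' where x': "x' \<in> V" "adj G x x'" "D x y = Suc (D x' y)" using Dstep Suc.prems by blast
  then have "D y x' \<le> D x' y" using Suc by auto
  moreover have "D y x \<le> D y x' + D x' x" using tri x' Suc.prems by blast
  moreover have "adj G x' x" using s x' Suc.prems unfolding symadj_def by blast
  then have "D x' x \<le> 1" using adj1 x' Suc.prems by blast
  ultimately show ?case using x' by linarith
qed

lemma Dsym: "x \<in> V \<Longrightarrow> y \<in> V \<Longrightarrow> D x y = D y x"
  using sym_le by (meson antisym)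

lemma walkD: "x \<in> V \<Longrightarrow> y \<in> V \<Longrightarrow> \<exists>xs. is_walk G xs \<and> hd xs = x \<and> last xs = y \<and> length xs = Suc (D x y)"
  using walk_exists[OF d] .

lemma betw_geo:
  assumes "x \<in> V" "y \<in> V" "z \<in> V" "D y x + D x z = D y z"
  shows "on_geodesic G x y z"
proof -
  obtain p1 where p1: "is_walk G p1" "hd p1 = y" "last p1 = x" "length p1 = Suc (D y x)"
    using walkD assms by blast
  obtain p2 where p2: "is_walk G p2" "hd p2 = x" "last p2 = z" "length p2 = Suc (D x z)"
    using walkD assms by blast
  obtain r where r: "p2 = x # r" using p2 is_walk_ne[OF p2(1)] by (cases p2) auto
  have w: "is_walk G (p1 @ r)"
  proof (cases "r = []")
    case True then show ?thesis using p1 by simp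
  next
    case False
    then have "adj G x (hd r)" "is_walk G r" using p2(1) r by (auto simp: is_walk_Cons)
    then show ?thesis using p1 by (intro is_walk_append) auto
  qed
  have ne: "p1 \<noteq> []" using is_walk_ne[OF p1(1)] .
  have "last (p1 @ r) = z" using p2 r p1 ne by (cases "r = []") auto
  moreover have "hd (p1 @ r) = y" using p1 ne by simp
  moreover have "length (p1 @ r) = Suc (D y z)" using p1 p2 r assms(4) by simp
  moreover have "x \<in> set (p1 @ r)" using p1 ne last_in_set by fastforce
  ultimately show ?thesis using w unfolding on_geodesic_def geodesic_def by blast
qed

lemma geo_betw:
  assumes "on_geodesic G x y z" "y \<in> V" "z \<in> V"
  shows "x \<in> V \<and> D y x + D x z = D y z"
proof -
  obtain p where p: "is_walk G p" "hd p = y" "last p = z" "length p = Suc (D y z)" "x \<in> set p"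
    using assms(1) unfolding on_geodesic_def geodesic_def by blast
  then have xV: "x \<in> V" by (auto simp: is_walk_def)
  obtain k where k: "k < length p" "p ! k = x" using p(5) by (auto simp: in_set_conv_nth)
  have "is_walk G (take (Suc k) p)" using is_walk_take[OF p(1)] by simp
  moreover have "hd (take (Suc k) p) = y" using p by simp
  moreover have "last (take (Suc k) p) = x" using k last_take_Suc by metis
  ultimately have 1: "D y x \<le> k" using dist_le[of G "take (Suc k) p" y x] k by simp
  have "is_walk G (drop k p)" using is_walk_drop[OF p(1) k(1)] .
  moreover have "hd (drop k p) = x" using k hd_drop_conv_nth by metis
  moreover have "last (drop k p) = z" using k p by simp
  ultimately have 2: "D x z \<le> length p - k - 1" using dist_le[of G "drop k p" x z] by simp
  have "D y z \<le> D y x + D x z" using tri xV assms by blast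
  then show ?thesis using 1 2 p(4) k xV by linarith
qed

lemma mmd_block:
  assumes m: "mmd G x y" and S: "strong_resolving_set G S"
  shows "x \<in> S \<or> y \<in> S"
proof -
  have xy: "x \<in> V" "y \<in> V" "x \<noteq> y" "md G x y" "md G y x" using m by (auto simp: mmd_def)
  obtain z where z: "z \<in> S" "on_geodesic G x y z \<or> on_geodesic G y x z"
    using S xy unfolding strong_resolving_set_def by blast
  have zV: "z \<in> V" using S z(1) unfolding strong_resolving_set_def by blast
  have key: "z = a" if ab: "a \<in> V" "b \<in> V" "md G a b" "on_geodesic G a b z" for a b
  proof (rule ccontr)
    assume "z \<noteq> a"
    have e: "D b a + D a z = D b z" using geo_betw[OF ab(4) ab(2) zV] by blast
    obtain a' where a': "a' \<in> V" "adj G a a'" "D a z = Suc (D a' z)" using Dstep[OF ab(1) zV] \<open>z \<noteq> a\<close> by metis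
    have "D b z \<le> D b a' + D a' z" using tri ab a' zV by blast
    then have "D b a' > D b a" using e a' by linarith
    moreover have "D a' b \<le> D a b" using ab(3) a' unfolding md_def by blast
    moreover have "D a' b = D b a'" "D a b = D b a" using Dsym a' ab by auto
    ultimately show False by linarith
  qed
  from z(2) show ?thesis
  proof
    assume "on_geodesic G x y z" then have "z = x" using key xy by blast
    then show ?thesis using z by simp
  next
    assume "on_geodesic G y x z" then have "z = y" using key xy by blast
    then show ?thesis using z by simp
  qed
qed

end


lemma fin_argmax:
  fixes f :: "'a \<Rightarrow> nat"
  assumes "finite A" "a \<in> A"
  shows "\<exists>u\<in>A. \<forall>u'\<in>A. f u' \<le> f u"
proof -
  have "\<forall>y. y \<in> A \<longrightarrow> f y < Suc (Max (f ` A))"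
    using assms by (simp add: le_imp_less_Suc)
  then show ?thesis using ex_has_greatest_nat[of "\<lambda>u. u \<in> A" a f "Suc (Max (f ` A))"] assms by blast
qed

context mg begin

lemma ext_md:
  assumes V: "a \<in> V" "b \<in> V" "c \<in> V" and e: "D b a + D a c = D b c"
    and mx: "\<forall>c'\<in>V. D b a + D a c' = D b c' \<longrightarrow> D b c' \<le> D b c"
  shows "md G c b"
  unfolding md_def
proof (intro ballI impI, rule ccontr)
  fix w assume w: "w \<in> V" "adj G c w" "\<not> D w b \<le> D c b"
  have "D c w \<le> 1" using adj1 w V by blast
  then have "D b w \<le> D b c + 1" using tri[of b c w] V w by linarith
  moreover have "D b w = D w b" "D b c = D c b" using Dsym V w by auto
  ultimately have bw: "D b w = D b c + 1" using w by linarith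
  have "D a w \<le> D a c + 1" using tri[of a c w] V w \<open>D c w \<le> 1\<close> by linarith
  then have "D b a + D a w \<le> D b w" using e bw by linarith
  moreover have "D b w \<le> D b a + D a w" using tri V w by blast
  ultimately have "D b a + D a w = D b w" by linarith
  then have "D b w \<le> D b c" using mx w by blast
  then show False using bw by linarith
qed

lemma cover_srs:
  assumes fin: "finite V" and SV: "S \<subseteq> V" and cov: "\<forall>u v. mmd G u v \<longrightarrow> u \<in> S \<or> v \<in> S"
  shows "strong_resolving_set G S"
  unfolding strong_resolving_set_def
proof (intro conjI ballI impI)
  show "S \<subseteq> V" by fact
next
  fix x y assume xy: "x \<in> V" "y \<in> V" "x \<noteq> y"
  define A where "A = {u \<in> V. D y x + D x u = D y u}"
  have "x \<in> A" using xy by (simp add: A_def)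
  then obtain u where u: "u \<in> A" "\<forall>u'\<in>A. D y u' \<le> D y u"
    using fin_argmax[of A x "D y"] fin by (auto simp: A_def)
  have uV: "u \<in> V" and ue: "D y x + D x u = D y u" using u by (auto simp: A_def)
  have mu: "md G u y" using ext_md[OF xy(1) xy(2) uV ue] u(2) by (auto simp: A_def)
  have "D y x > 0" using Dz xy by auto
  then have uy: "u \<noteq> y" using ue xy by auto
  define B where "B = {v \<in> V. D u y + D y v = D u v}"
  have "y \<in> B" using xy uV by (simp add: B_def)
  then obtain v where v: "v \<in> B" "\<forall>v'\<in>B. D u v' \<le> D u v"
    using fin_argmax[of B y "D u"] fin by (auto simp: B_def)
  have vV: "v \<in> V" and ve: "D u y + D y v = D u v" using v by (auto simp: B_def)
  have mv: "md G v u" using ext_md[OF xy(2) uV vV ve] v(2) by (auto simp: B_def)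
  have "D u y > 0" using Dz xy uV uy by auto
  then have uv: "u \<noteq> v" using ve vV by auto
  have muv: "md G u v"
    unfolding md_def
  proof (intro ballI impI, rule ccontr)
    fix w assume w: "w \<in> V" "adj G u w" "\<not> D w v \<le> D u v"
    have "D u w \<le> 1" using adj1 w uV by blast
    have s1: "D v w = D w v" "D u v = D v u" "D u y = D y u" "D y v = D v y" "D w y = D y w" "D u w = D w u"
      using Dsym xy uV vV w by auto
    have "D v w \<le> D v y + D y w" using tri vV xy w by blast
    then have "D y w \<ge> D y u + 1" using w ve s1 by linarith
    moreover have "D y w \<le> D y u + D u w" using tri xy uV w by blast
    ultimately have yw: "D y w = D y u + 1" using \<open>D u w \<le> 1\<close> by linarith
    have "D x w \<le> D x u + D u w" using tri xy uV w by blast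
    then have "D y x + D x w \<le> D y w" using yw ue \<open>D u w \<le> 1\<close> by linarith
    moreover have "D y w \<le> D y x + D x w" using tri xy w by blast
    ultimately have "w \<in> A" using w by (simp add: A_def)
    then have "D y w \<le> D y u" using u by blast
    then show False using yw by linarith
  qed
  have "mmd G u v" using uV vV uv mu muv mv unfolding mmd_def by blast
  then have "u \<in> S \<or> v \<in> S" using cov by blast
  then show "\<exists>z\<in>S. on_geodesic G x y z \<or> on_geodesic G y x z"
  proof
    assume "u \<in> S"
    moreover have "on_geodesic G x y u" using betw_geo[OF xy(1) xy(2) uV ue] .
    ultimately show ?thesis by blast
  next
    assume "v \<in> S"
    have "D u v \<le> D u x + D x v" using tri uV xy vV by blast
    moreover have "D u y = D y u" "D u x = D x u" using Dsym xy uV by auto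
    ultimately have "D x y + D y v \<le> D x v" using ve ue Dsym[OF xy(1) xy(2)] by linarith
    moreover have "D x v \<le> D x y + D y v" using tri xy vV by blast
    ultimately have "D x y + D y v = D x v" by linarith
    then have "on_geodesic G y x v" using betw_geo[OF xy(2) xy(1) vV] by simp
    then show ?thesis using \<open>v \<in> S\<close> by blast
  qed
qed

end


lemma excl: "maker_wins G t M B \<Longrightarrow> breaker_wins G t M B \<Longrightarrow> False"
proof (induction rule: maker_wins.induct)
  case (mw_end M B t)
  from mw_end.prems show ?case
    by (cases rule: breaker_wins.cases) (use mw_end.hyps in auto)
next
  case (mw_maker v M B)
  from mw_maker.prems show ?case
    by (cases rule: breaker_wins.cases) (use mw_maker.hyps mw_maker.IH in auto)
next
  case (mw_breaker M B)
  from mw_breaker.prems show ?case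
    by (cases rule: breaker_wins.cases) (use mw_breaker in blast)+
qed

lemma free_insM: "free G (insert v M) B = free G M B - {v}"
  by (auto simp: free_def)
lemma free_insB: "free G M (insert v B) = free G M B - {v}"
  by (auto simp: free_def)

lemma card_free_less: "finite (verts G) \<Longrightarrow> v \<in> free G M B \<Longrightarrow> card (free G M B - {v}) < card (free G M B)"
  using card_Diff1_less[of "free G M B" v] by (simp add: free_def)

context mg begin

lemma blocked:
  assumes fin: "finite V" and m: "mmd G x y"
  shows "x \<in> B \<Longrightarrow> y \<in> B \<Longrightarrow> M \<inter> B = {} \<Longrightarrow> breaker_wins G t M B"
proof (induction "card (free G M B)" arbitrary: t M B rule: less_induct)
  case less
  show ?case
  proof (cases "free G M B = {}")
    case True
    have "\<not> maker_goal G M"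
    proof
      assume "maker_goal G M"
      then obtain S where "S \<subseteq> M" "strong_resolving_set G S" unfolding maker_goal_def by blast
      then show False using mmd_block[OF m] less.prems by blast
    qed
    then show ?thesis using True by (metis bw_end)
  next
    case False
    then obtain v where v: "v \<in> free G M B" by blast
    show ?thesis
    proof (cases t)
      case True
      have "breaker_wins G False (insert v M) B" if "v \<in> free G M B" for v
        using less.hyps[of "insert v M" B False] that less.prems card_free_less[OF fin that]
        by (auto simp: free_insM free_def)
      then have "\<forall>v\<in>free G M B. breaker_wins G False (insert v M) B" by blast
      then show ?thesis using True bw_maker[OF False] by simp
    next
      case f: False
      have "breaker_wins G True M (insert v B)"
        using less.hyps[of M "insert v B" True] v less.prems card_free_less[OF fin v]
        by (auto simp: free_insB free_def)
      then show ?thesis using f bw_breaker[OF v] by simp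
    qed
  qed
qed

lemma B1:
  assumes fin: "finite V" and M: "M \<inter> B = {}"
    and abc: "a \<in> free G M B" "b \<in> free G M B" "c \<in> free G M B" "b \<noteq> c" "mmd G a b" "mmd G a c"
  shows "breaker_wins G False M B"
proof -
  have "breaker_wins G True M (insert a B)"
  proof (rule bw_maker)
    show "free G M (insert a B) \<noteq> {}" using abc by (auto simp: free_def mmd_def)
  next
    show "\<forall>v\<in>free G M (insert a B). breaker_wins G False (insert v M) (insert a B)"
    proof
      fix v assume v: "v \<in> free G M (insert a B)"
      obtain w where w: "w \<in> {b, c}" "w \<noteq> v" using abc(4) by blast
      have mw: "mmd G a w" using w abc by auto
      have wf: "w \<in> free G (insert v M) (insert a B)"
        using w abc mw by (auto simp: free_def mmd_def)
      have "breaker_wins G True (insert v M) (insert w (insert a B))"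
        using blocked[OF fin mw] M v abc(1) wf by (auto simp: free_def)
      then show "breaker_wins G False (insert v M) (insert a B)"
        using wf by (metis bw_breaker)
    qed
  qed
  then show ?thesis using abc(1) by (metis bw_breaker)
qed

lemma breaker_outcome:
  assumes fin: "finite V" and ne: "V \<noteq> {}"
    and cfg: "\<forall>v\<in>V. \<exists>a b c. a \<noteq> v \<and> b \<noteq> v \<and> c \<noteq> v \<and> b \<noteq> c \<and> mmd G a b \<and> mmd G a c"
  shows "O_SR G = Obreaker"
proof -
  have fr: "free G {} {} = V" by (simp add: free_def)
  have bT: "breaker_wins G True {} {}"
  proof (rule bw_maker)
    show "free G {} {} \<noteq> {}" using fr ne by simp
    show "\<forall>v\<in>free G {} {}. breaker_wins G False (insert v {}) {}"
    proof
      fix v assume "v \<in> free G {} {}"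
      then obtain a b c where abc: "a \<noteq> v" "b \<noteq> v" "c \<noteq> v" "b \<noteq> c" "mmd G a b" "mmd G a c"
        using cfg fr by auto
      show "breaker_wins G False (insert v {}) {}"
        by (rule B1[OF fin]) (use abc in \<open>auto simp: free_def mmd_def\<close>)
    qed
  qed
  obtain v0 where "v0 \<in> V" using ne by blast
  then obtain a b c where abc: "b \<noteq> c" "mmd G a b" "mmd G a c"
    using cfg by blast
  have bF: "breaker_wins G False {} {}"
    by (rule B1[OF fin]) (use abc in \<open>auto simp: free_def mmd_def\<close>)
  have "\<not> maker_wins G True {} {}" using excl bT by blast
  then show ?thesis using bT bF unfolding O_SR_def by auto
qed

definition good :: "'a set \<Rightarrow> 'a set \<Rightarrow> bool" where
  "good M B \<longleftrightarrow> M \<inter> B = {} \<and> M \<subseteq> V \<and> (\<forall>x y. mmd G x y \<longrightarrow> x \<in> M \<or> y \<in> M \<or> (x \<notin> B \<and> y \<notin> B))"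

lemma good_end: "finite V \<Longrightarrow> good M B \<Longrightarrow> free G M B = {} \<Longrightarrow> maker_goal G M"
  unfolding maker_goal_def
  apply (rule exI[of _ M])
  apply (intro conjI cover_srs)
     apply (auto simp: good_def free_def mmd_def)
  by blast

lemma maker_good:
  assumes fin: "finite V" and uniq: "\<forall>a b c. mmd G a b \<and> mmd G a c \<longrightarrow> b = c"
  shows "good M B \<Longrightarrow> maker_wins G t M B"
proof (induction "card (free G M B)" arbitrary: t M B rule: less_induct)
  case less
  show ?case
  proof (cases "free G M B = {}")
    case True
    then show ?thesis using good_end[OF fin less.prems] by (intro mw_end) auto
  next
    case False
    then obtain v0 where v0: "v0 \<in> free G M B" by blast
    show ?thesis
    proof (cases t)
      case True
      have "good (insert v0 M) B" using less.prems v0 by (auto simp: good_def free_def)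
      then have "maker_wins G False (insert v0 M) B"
        using less.hyps[of "insert v0 M" B False] card_free_less[OF fin v0] by (simp add: free_insM)
      then show ?thesis using True mw_maker[OF v0] by simp
    next
      case f: False
      have "maker_wins G True M (insert v B)" if v: "v \<in> free G M B" for v
      proof (cases "\<exists>p. mmd G v p \<and> p \<in> free G M B")
        case True
        then obtain p where p: "mmd G v p" "p \<in> free G M B" by blast
        have pv: "p \<noteq> v" using p by (auto simp: mmd_def)
        have g: "good (insert p M) (insert v B)"
          unfolding good_def
        proof (intro conjI allI impI)
          show "insert p M \<inter> insert v B = {}" using less.prems v p pv by (auto simp: good_def free_def)
          show "insert p M \<subseteq> V" using less.prems p by (auto simp: good_def free_def)
        next
          fix x y assume xy: "mmd G x y"
          show "x \<in> insert p M \<or> y \<in> insert p M \<or> x \<notin> insert v B \<and> y \<notin> insert v B"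
          proof (cases "x = v \<or> y = v")
            case True
            then show ?thesis
            proof
              assume "x = v" then have "y = p" using uniq xy p by blast
              then show ?thesis by simp
            next
              assume "y = v" then have "x = p" using uniq mmd_sym[OF xy] p by blast
              then show ?thesis by simp
            qed
          next
            case False
            then show ?thesis using less.prems xy unfolding good_def by blast
          qed
        qed
        have fr: "free G (insert p M) (insert v B) = free G M B - {v} - {p}"
          by (auto simp: free_def)
        have "card (free G M B - {v} - {p}) < card (free G M B)"
          using card_free_less[OF fin v] pv p
          by (metis card_Diff1_less_iff dual_order.strict_trans finite_Diff free_def fin insert_Diff insert_iff)
        then have "maker_wins G False (insert p M) (insert v B)"
          using less.hyps g fr by metis
        moreover have "p \<in> free G M (insert v B)" using p pv by (auto simp: free_def)
        ultimately show ?thesis by (intro mw_maker)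
      next
        case False
        have g: "good M (insert v B)"
          unfolding good_def
        proof (intro conjI allI impI)
          show "M \<inter> insert v B = {}" using less.prems v by (auto simp: good_def free_def)
          show "M \<subseteq> V" using less.prems by (auto simp: good_def)
        next
          fix x y assume xy: "mmd G x y"
          have o: "x \<in> M \<or> y \<in> M \<or> x \<notin> B \<and> y \<notin> B" using less.prems xy unfolding good_def by blast
          have "y \<in> M" if "x = v" "x \<notin> M" "y \<notin> M"
          proof -
            have "y \<notin> free G M B" using False xy that by blast
            moreover have "y \<in> V" using xy by (auto simp: mmd_def)
            ultimately have "y \<in> B" using that by (auto simp: free_def)
            then show ?thesis using o that by blast
          qed
          moreover have "x \<in> M" if "y = v" "x \<notin> M" "y \<notin> M"
          proof -
            have "x \<notin> free G M B" using False mmd_sym[OF xy] that by blast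
            moreover have "x \<in> V" using xy by (auto simp: mmd_def)
            ultimately have "x \<in> B" using that by (auto simp: free_def)
            then show ?thesis using o that by blast
          qed
          ultimately show "x \<in> M \<or> y \<in> M \<or> x \<notin> insert v B \<and> y \<notin> insert v B" using o by blast
        qed
        then show ?thesis
          using less.hyps[of M "insert v B" True] card_free_less[OF fin v] by (simp add: free_insB)
      qed
      then have "\<forall>v\<in>free G M B. maker_wins G True M (insert v B)" by blast
      then show ?thesis using f mw_breaker[OF False] by simp
    qed
  qed
qed

lemma maker_outcome:
  assumes fin: "finite V" and uniq: "\<forall>a b c. mmd G a b \<and> mmd G a c \<longrightarrow> b = c"
  shows "O_SR G = Omaker"
proof -
  have "good {} {}" by (simp add: good_def)
  then have "maker_wins G t {} {}" for t using maker_good[OF fin uniq] by blast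
  then show ?thesis unfolding O_SR_def by simp
qed

end


lemma verts_prod[simp]: "verts (G \<box> H) = verts G \<times> verts H"
  by (simp add: cart_prod_def verts_def)

lemma adj_prod[simp]: "adj (G \<box> H) (u, w) (u', w') \<longleftrightarrow> (u = u' \<and> adj H w w') \<or> (w = w' \<and> adj G u u')"
  by (simp add: cart_prod_def adj_def)

lemma symadj_prod: "symadj G \<Longrightarrow> symadj H \<Longrightarrow> symadj (G \<box> H)"
  unfolding symadj_def by auto

lemma is_dist_prod:
  assumes f: "is_dist G f" and g: "is_dist H g"
  shows "is_dist (G \<box> H) (\<lambda>a b. f (fst a) (fst b) + g (snd a) (snd b))"
  unfolding is_dist_def
proof (intro conjI ballI impI)
  fix y assume "y \<in> verts (G \<box> H)"
  then show "f (fst y) (fst y) + g (snd y) (snd y) = 0" using is_dist_D1[OF f] is_dist_D1[OF g] by auto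
next
  fix x y assume xy: "x \<in> verts (G \<box> H)" "y \<in> verts (G \<box> H)" "x \<noteq> y"
  obtain x1 x2 y1 y2 where e: "x = (x1, x2)" "y = (y1, y2)" by (cases x, cases y) auto
  show "\<exists>x'\<in>verts (G \<box> H). adj (G \<box> H) x x' \<and>
          f (fst x) (fst y) + g (snd x) (snd y) = Suc (f (fst x') (fst y) + g (snd x') (snd y))"
  proof (cases "x1 = y1")
    case False
    then obtain x' where "x' \<in> verts G" "adj G x1 x'" "f x1 y1 = Suc (f x' y1)"
      using is_dist_D2[OF f, of x1 y1] xy e by auto
    then show ?thesis using xy e by (intro bexI[of _ "(x', x2)"]) auto
  next
    case True
    then have "x2 \<noteq> y2" using xy e by auto
    then obtain x' where "x' \<in> verts H" "adj H x2 x'" "g x2 y2 = Suc (g x' y2)"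
      using is_dist_D2[OF g, of x2 y2] xy e by auto
    then show ?thesis using xy e True by (intro bexI[of _ "(x1, x')"]) auto
  qed
next
  fix x x' y assume a: "x \<in> verts (G \<box> H)" "x' \<in> verts (G \<box> H)" "y \<in> verts (G \<box> H)" "adj (G \<box> H) x x'"
  obtain x1 x2 y1 y2 x1' x2' where e: "x = (x1, x2)" "y = (y1, y2)" "x' = (x1', x2')"
    by (cases x, cases y, cases x') auto
  have "(x1 = x1' \<and> adj H x2 x2') \<or> (x2 = x2' \<and> adj G x1 x1')" using a(4) e by simp
  then show "f (fst x) (fst y) + g (snd x) (snd y) \<le> Suc (f (fst x') (fst y) + g (snd x') (snd y))"
  proof
    assume h: "x1 = x1' \<and> adj H x2 x2'"
    then have "g x2 y2 \<le> Suc (g x2' y2)" using is_dist_D3[OF g] a e by auto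
    then show ?thesis using e h by simp
  next
    assume h: "x2 = x2' \<and> adj G x1 x1'"
    then have "f x1 y1 \<le> Suc (f x1' y1)" using is_dist_D3[OF f] a e by auto
    then show ?thesis using e h by simp
  qed
qed

lemma dist_prod:
  assumes "is_dist G (dist G)" "is_dist H (dist H)" "a \<in> verts (G \<box> H)" "b \<in> verts (G \<box> H)"
  shows "dist (G \<box> H) a b = dist G (fst a) (fst b) + dist H (snd a) (snd b)"
  using dist_eq[OF is_dist_prod[OF assms(1,2)] assms(3,4)] by simp

lemma is_dist_prod_dist:
  assumes "is_dist G (dist G)" "is_dist H (dist H)"
  shows "is_dist (G \<box> H) (dist (G \<box> H))"
  using is_dist_dist[OF is_dist_prod[OF assms]] .

lemma md_prod_iff:
  assumes dG: "is_dist G (dist G)" and dH: "is_dist H (dist H)"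
    and V: "g \<in> verts G" "g' \<in> verts G" "h \<in> verts H" "h' \<in> verts H"
  shows "md (G \<box> H) (g, h) (g', h') \<longleftrightarrow> md G g g' \<and> md H h h'"
proof -
  have D: "dist (G \<box> H) (a1, a2) (g', h') = dist G a1 g' + dist H a2 h'"
    if "a1 \<in> verts G" "a2 \<in> verts H" for a1 a2
    using dist_prod[OF dG dH, of "(a1, a2)" "(g', h')"] that V by simp
  show ?thesis
  proof
    assume m: "md (G \<box> H) (g, h) (g', h')"
    have "md G g g'" unfolding md_def
    proof (intro ballI impI)
      fix w assume "w \<in> verts G" "adj G g w"
      then have "dist (G \<box> H) (w, h) (g', h') \<le> dist (G \<box> H) (g, h) (g', h')"
        using m V unfolding md_def by auto
      then show "dist G w g' \<le> dist G g g'" using D V \<open>w \<in> verts G\<close> by simp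
    qed
    moreover have "md H h h'" unfolding md_def
    proof (intro ballI impI)
      fix w assume "w \<in> verts H" "adj H h w"
      then have "dist (G \<box> H) (g, w) (g', h') \<le> dist (G \<box> H) (g, h) (g', h')"
        using m V unfolding md_def by auto
      then show "dist H w h' \<le> dist H h h'" using D V \<open>w \<in> verts H\<close> by simp
    qed
    ultimately show "md G g g' \<and> md H h h'" ..
  next
    assume m: "md G g g' \<and> md H h h'"
    show "md (G \<box> H) (g, h) (g', h')" unfolding md_def
    proof (intro ballI impI)
      fix w assume w: "w \<in> verts (G \<box> H)" "adj (G \<box> H) (g, h) w"
      obtain w1 w2 where e: "w = (w1, w2)" by (cases w) auto
      have "(g = w1 \<and> adj H h w2) \<or> (h = w2 \<and> adj G g w1)" using w e by simp
      then show "dist (G \<box> H) w (g', h') \<le> dist (G \<box> H) (g, h) (g', h')"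
      proof
        assume "g = w1 \<and> adj H h w2"
        then show ?thesis using m w e D V unfolding md_def by auto
      next
        assume "h = w2 \<and> adj G g w1"
        then show ?thesis using m w e D V unfolding md_def by auto
      qed
    qed
  qed
qed

definition hasnb :: "'a graph \<Rightarrow> bool" where
  "hasnb G \<longleftrightarrow> (\<forall>x\<in>verts G. \<exists>w\<in>verts G. adj G x w \<and> w \<noteq> x)"

lemma md_self_false:
  assumes "is_dist G (dist G)" "hasnb G" "g \<in> verts G" "md G g g"
  shows False
proof -
  obtain w where w: "w \<in> verts G" "adj G g w" "w \<noteq> g" using assms(2,3) unfolding hasnb_def by blast
  then have "dist G w g \<le> dist G g g" using assms(4) unfolding md_def by blast
  then have "dist G w g = 0" using is_dist_D1[OF assms(1) assms(3)] by simp
  moreover have "dist G w g \<noteq> 0" using is_dist_D2[OF assms(1) w(1) assms(3) w(3)] by auto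
  ultimately show False by simp
qed

lemma mmd_prod:
  assumes dG: "is_dist G (dist G)" and dH: "is_dist H (dist H)"
    and m: "mmd G g g'" "mmd H h h'"
  shows "mmd (G \<box> H) (g, h) (g', h')"
  using m md_prod_iff[OF dG dH, of g g' h h'] md_prod_iff[OF dG dH, of g' g h' h]
  unfolding mmd_def by auto

lemma mmd_prod_rev:
  assumes dG: "is_dist G (dist G)" and dH: "is_dist H (dist H)" and nG: "hasnb G" and nH: "hasnb H"
    and m: "mmd (G \<box> H) (g, h) (g', h')"
  shows "mmd G g g' \<and> mmd H h h'"
proof -
  have V: "g \<in> verts G" "g' \<in> verts G" "h \<in> verts H" "h' \<in> verts H" using m by (auto simp: mmd_def)
  have a: "md G g g'" "md H h h'" "md G g' g" "md H h' h"
    using m md_prod_iff[OF dG dH, of g g' h h'] md_prod_iff[OF dG dH, of g' g h' h] V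
    unfolding mmd_def by auto
  have "g \<noteq> g'" using md_self_false[OF dG nG] V a by metis
  moreover have "h \<noteq> h'" using md_self_false[OF dH nH] V a by metis
  ultimately show ?thesis using a V unfolding mmd_def by auto
qed



lemma verts_K[simp]: "verts (K n) = {0..<n}" by (simp add: complete_graph_def verts_def)
lemma adj_K[simp]: "adj (K n) x y \<longleftrightarrow> x \<noteq> y" by (simp add: complete_graph_def adj_def)

lemma is_dist_K: "is_dist (K n) (\<lambda>i j. if i = j then 0 else 1)"
  unfolding is_dist_def by auto

lemma dist_K: "i < n \<Longrightarrow> j < n \<Longrightarrow> dist (K n) i j = (if i = j then 0 else 1)"
  using dist_eq[OF is_dist_K] by simp

lemma is_dist_K_dist: "is_dist (K n) (dist (K n))"
  using is_dist_dist[OF is_dist_K] .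

lemma symadj_K: "symadj (K n)" by (simp add: symadj_def)

lemma mmd_K: "i < n \<Longrightarrow> j < n \<Longrightarrow> i \<noteq> j \<Longrightarrow> mmd (K n) i j"
  unfolding mmd_def md_def by (auto simp: dist_K)

lemma verts_C[simp]: "verts (C n) = {0..<n}" by (simp add: cycle_graph_def verts_def)

definition sucn :: "nat \<Rightarrow> nat \<Rightarrow> nat" where "sucn n i = (if i + 1 = n then 0 else i + 1)"
definition dd :: "nat \<Rightarrow> nat \<Rightarrow> nat \<Rightarrow> nat" where "dd n i j = (if j \<le> i then i - j else i + n - j)"
definition cd :: "nat \<Rightarrow> nat \<Rightarrow> nat \<Rightarrow> nat" where "cd n i j = min (dd n i j) (dd n j i)"

lemma mod_suc: "i < n \<Longrightarrow> Suc i mod n = sucn n i"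
  unfolding sucn_def by (cases "i + 1 = n") auto

lemma adj_C: "i < n \<Longrightarrow> j < n \<Longrightarrow> adj (C n) i j \<longleftrightarrow> j = sucn n i \<or> i = sucn n j"
proof -
  assume a: "i < n" "j < n"
  have "adj (C n) i j \<longleftrightarrow> Suc i mod n = j \<or> Suc j mod n = i" by (simp add: cycle_graph_def adj_def)
  then show ?thesis using mod_suc[OF a(1)] mod_suc[OF a(2)] by auto
qed

lemma symadj_C: "symadj (C n)" unfolding symadj_def by (auto simp: cycle_graph_def adj_def)

lemma cd_down:
  assumes "n \<ge> 3" "x < n" "y < n" "x \<noteq> y" "dd n x y \<le> dd n y x"
  shows "cd n x y = Suc (cd n (if x = 0 then n - 1 else x - 1) y)"
proof (cases "x = 0")
  case True
  then show ?thesis using assms unfolding cd_def dd_def unfolding min_def by (auto split: if_splits; linarith)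
next
  case False
  then show ?thesis using assms unfolding cd_def dd_def unfolding min_def by (auto split: if_splits; linarith)
qed

lemma cd_up:
  assumes "n \<ge> 3" "x < n" "y < n" "x \<noteq> y" "\<not> dd n x y \<le> dd n y x"
  shows "cd n x y = Suc (cd n (sucn n x) y)"
  using assms unfolding cd_def dd_def sucn_def min_def by (auto split: if_splits; linarith)

lemma cd_adj:
  assumes "x < n" "x' < n" "y < n" "x' = sucn n x \<or> x = sucn n x'"
  shows "cd n x y \<le> Suc (cd n x' y)"
  using assms unfolding cd_def dd_def sucn_def min_def by (auto split: if_splits; linarith)

lemma cd_half: "x < n \<Longrightarrow> y < n \<Longrightarrow> cd n x y \<le> n div 2"
  unfolding cd_def dd_def min_def by (auto split: if_splits; linarith)

lemma cd_pos: "x < n \<Longrightarrow> y < n \<Longrightarrow> x \<noteq> y \<Longrightarrow> cd n x y > 0"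
  unfolding cd_def dd_def by (auto split: if_splits)

lemma cd_sym: "cd n x y = cd n y x"
  unfolding cd_def by simp

lemma cd_even_uniq:
  assumes "n = 2 * k" "i < n" "j < n" "j' < n" "cd n i j = k" "cd n i j' = k"
  shows "j = j'"
  using assms unfolding cd_def dd_def min_def by (auto split: if_splits; linarith)

lemma dd_suc_l: "i < n \<Longrightarrow> j < n \<Longrightarrow> sucn n i \<noteq> j \<Longrightarrow> dd n (sucn n i) j = Suc (dd n i j)"
  unfolding dd_def sucn_def by (auto split: if_splits)

lemma dd_suc_r: "i < n \<Longrightarrow> j < n \<Longrightarrow> i \<noteq> j \<Longrightarrow> dd n j (sucn n i) = dd n j i - 1"
  unfolding dd_def sucn_def by (auto split: if_splits)

lemma dd_sum: "i < n \<Longrightarrow> j < n \<Longrightarrow> i \<noteq> j \<Longrightarrow> dd n i j + dd n j i = n"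
  unfolding dd_def by (auto split: if_splits)

lemma dd_suc_self: "i < n \<Longrightarrow> 2 \<le> n \<Longrightarrow> dd n (sucn n i) i = 1"
  unfolding dd_def sucn_def by (auto split: if_splits)

lemma sucn_lt: "i < n \<Longrightarrow> sucn n i < n"
  unfolding sucn_def by auto

lemma sucn_ne: "i < n \<Longrightarrow> 2 \<le> n \<Longrightarrow> sucn n i \<noteq> i"
  unfolding sucn_def by auto

lemma sucn_pred: "i < n \<Longrightarrow> sucn n (if i = 0 then n - 1 else i - 1) = i"
  unfolding sucn_def by auto

lemma cd_grow1:
  assumes "n = 2 * k" "2 \<le> k" "i < n" "j < n" "i \<noteq> j" "cd n i j < k" "dd n i j \<le> dd n j i"
  shows "cd n i j < cd n (sucn n i) j"
proof -
  have sm: "dd n i j + dd n j i = n" using dd_sum assms by blast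
  have "sucn n i \<noteq> j"
  proof
    assume "sucn n i = j"
    then have "dd n j i = 1" using dd_suc_self[of i n] assms by simp
    then show False using sm assms by linarith
  qed
  then have "dd n (sucn n i) j = Suc (dd n i j)" "dd n j (sucn n i) = dd n j i - 1"
    using dd_suc_l dd_suc_r assms by auto
  then show ?thesis using sm assms unfolding cd_def by linarith
qed

lemma cd_grow2:
  assumes "n = 2 * k" "2 \<le> k" "i < n" "j < n" "i \<noteq> j" "cd n i j < k" "\<not> dd n i j \<le> dd n j i"
  shows "cd n i j < cd n (if i = 0 then n - 1 else i - 1) j"
proof -
  define p where "p = (if i = 0 then n - 1 else i - 1)"
  have p: "p < n" "sucn n p = i" using sucn_pred[of i n] assms by (auto simp: p_def)
  have sm: "dd n i j + dd n j i = n" using dd_sum assms by blast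
  have "p \<noteq> j"
  proof
    assume "p = j"
    then have "dd n i j = 1" using dd_suc_self[of p n] assms p by simp
    then show False using sm assms by linarith
  qed
  then have "dd n i j = Suc (dd n p j)" "dd n j i = dd n j p - 1"
    using dd_suc_l[of p n j] dd_suc_r[of p n j] assms p by auto
  moreover have "dd n p j + dd n j p = n" using dd_sum \<open>p \<noteq> j\<close> p assms by blast
  ultimately show ?thesis using sm assms unfolding cd_def p_def[symmetric] by linarith
qed



lemma is_dist_C:
  assumes n: "n \<ge> 3"
  shows "is_dist (C n) (cd n)"
  unfolding is_dist_def
proof (intro conjI ballI impI)
  fix y assume "y \<in> verts (C n)" then show "cd n y y = 0" by (simp add: cd_def dd_def)
next
  fix x y assume xy: "x \<in> verts (C n)" "y \<in> verts (C n)" "x \<noteq> y"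
  show "\<exists>x'\<in>verts (C n). adj (C n) x x' \<and> cd n x y = Suc (cd n x' y)"
  proof (cases "dd n x y \<le> dd n y x")
    case True
    define x' where "x' = (if x = 0 then n - 1 else x - 1)"
    have "x = sucn n x'" using sucn_pred[of x n] xy by (auto simp: x'_def)
    moreover have "x' < n" using xy by (auto simp: x'_def)
    moreover have "cd n x y = Suc (cd n x' y)"
      using cd_down[OF n _ _ xy(3) True] xy unfolding x'_def by auto
    ultimately show ?thesis using xy adj_C by (intro bexI[of _ x']) auto
  next
    case False
    have "sucn n x < n" using xy sucn_lt by auto
    moreover have "cd n x y = Suc (cd n (sucn n x) y)"
      using cd_up[OF n _ _ xy(3) False] xy by auto
    ultimately show ?thesis using xy adj_C by (intro bexI[of _ "sucn n x"]) auto
  qed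
next
  fix x x' y assume a: "x \<in> verts (C n)" "x' \<in> verts (C n)" "y \<in> verts (C n)" "adj (C n) x x'"
  then have "x' = sucn n x \<or> x = sucn n x'" using adj_C by auto
  then show "cd n x y \<le> Suc (cd n x' y)"
    using a cd_adj by auto
qed

lemma dist_C: "n \<ge> 3 \<Longrightarrow> i < n \<Longrightarrow> j < n \<Longrightarrow> dist (C n) i j = cd n i j"
  using dist_eq[OF is_dist_C] by simp

lemma is_dist_C_dist: "n \<ge> 3 \<Longrightarrow> is_dist (C n) (dist (C n))"
  using is_dist_dist[OF is_dist_C] .

lemma hasnb_C: "n \<ge> 3 \<Longrightarrow> hasnb (C n)"
  unfolding hasnb_def using adj_C sucn_lt sucn_ne by auto

lemma hasnb_K: "n \<ge> 2 \<Longrightarrow> hasnb (K n)"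
  unfolding hasnb_def
proof
  fix x assume "n \<ge> 2" "x \<in> verts (K n)"
  then show "\<exists>w\<in>verts (K n). adj (K n) x w \<and> w \<noteq> x"
  proof (cases "x = 0")
    case True then show ?thesis using \<open>n \<ge> 2\<close> by (intro bexI[of _ 1]) auto
  next
    case False then show ?thesis using \<open>n \<ge> 2\<close> by (intro bexI[of _ 0]) auto
  qed
qed

lemma mmd_C_half:
  assumes "n \<ge> 3" "i < n" "j < n" "cd n i j = n div 2"
  shows "mmd (C n) i j"
proof -
  have "i \<noteq> j" using assms by (auto simp: cd_def dd_def)
  moreover have "md (C n) i j" using assms cd_half unfolding md_def by (auto simp: dist_C)
  moreover have "md (C n) j i" using assms cd_half cd_sym[of n i j] unfolding md_def by (auto simp: dist_C)
  ultimately show ?thesis using assms unfolding mmd_def by auto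
qed

lemma mmd_C_even:
  assumes "n = 2 * k" "2 \<le> k" "mmd (C n) i j"
  shows "cd n i j = k"
proof (rule ccontr)
  assume ne: "cd n i j \<noteq> k"
  have ij: "i < n" "j < n" "i \<noteq> j" "md (C n) i j" using assms by (auto simp: mmd_def)
  have "cd n i j \<le> k" using cd_half[OF ij(1,2)] assms by simp
  then have lt: "cd n i j < k" using ne by simp
  have n3: "n \<ge> 3" using assms by simp
  show False
  proof (cases "dd n i j \<le> dd n j i")
    case True
    have "cd n i j < cd n (sucn n i) j" using cd_grow1[OF assms(1,2) ij(1-3) lt True] .
    moreover have "sucn n i < n" using sucn_lt ij by blast
    moreover have "adj (C n) i (sucn n i)" using adj_C ij \<open>sucn n i < n\<close> by blast
    moreover have "dist (C n) (sucn n i) j \<le> dist (C n) i j"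
      using ij \<open>adj (C n) i (sucn n i)\<close> \<open>sucn n i < n\<close> unfolding md_def by auto
    ultimately show False using dist_C[OF n3] ij by (metis leD)
  next
    case False
    define p where "p = (if i = 0 then n - 1 else i - 1)"
    have p: "p < n" "sucn n p = i" using sucn_pred[of i n] ij by (auto simp: p_def)
    have "cd n i j < cd n p j" using cd_grow2[OF assms(1,2) ij(1-3) lt False] unfolding p_def .
    moreover have "adj (C n) i p" using adj_C ij p by blast
    moreover have "dist (C n) p j \<le> dist (C n) i j"
      using ij \<open>adj (C n) i p\<close> p unfolding md_def by auto
    ultimately show False using dist_C[OF n3] ij p by (metis leD)
  qed
qed



definition leaf :: "'a graph \<Rightarrow> 'a \<Rightarrow> bool" where
  "leaf T x \<longleftrightarrow> x \<in> verts T \<and> (\<forall>w1 w2. adj T x w1 \<longrightarrow> adj T x w2 \<longrightarrow> w1 = w2)"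

lemma leaf_mmd:
  assumes d: "is_dist T (dist T)" and l: "leaf T l1" "leaf T l2" "l1 \<noteq> l2"
  shows "mmd T l1 l2"
proof -
  have md: "md T a b" if ab: "leaf T a" "leaf T b" "a \<noteq> b" for a b
    unfolding md_def
  proof (intro ballI impI)
    fix w assume w: "w \<in> verts T" "adj T a w"
    obtain x' where "x' \<in> verts T" "adj T a x'" "dist T a b = Suc (dist T x' b)"
      using is_dist_D2[OF d, of a b] ab unfolding leaf_def by auto
    moreover have "x' = w" using ab(1) w \<open>adj T a x'\<close> unfolding leaf_def by blast
    ultimately show "dist T w b \<le> dist T a b" by simp
  qed
  show ?thesis using md l unfolding mmd_def leaf_def by auto
qed

definition path :: "'a graph \<Rightarrow> 'a list \<Rightarrow> bool" where
  "path T xs \<longleftrightarrow> is_walk T xs \<and> distinct xs"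

lemma graph_sym: "graph T \<Longrightarrow> adj T x y \<Longrightarrow> adj T y x"
  unfolding graph_def by blast
lemma graph_irr: "graph T \<Longrightarrow> \<not> adj T x x"
  unfolding graph_def by blast
lemma graph_in: "graph T \<Longrightarrow> adj T x y \<Longrightarrow> x \<in> verts T \<and> y \<in> verts T"
  unfolding graph_def by blast
lemma graph_symadj: "graph T \<Longrightarrow> symadj T"
  unfolding graph_def symadj_def by blast

lemma walk_nth_adj: "is_walk T xs \<Longrightarrow> Suc i < length xs \<Longrightarrow> adj T (xs ! i) (xs ! Suc i)"
  unfolding is_walk_def by blast

lemma path_len: "finite (verts T) \<Longrightarrow> path T xs \<Longrightarrow> length xs \<le> card (verts T)"
  unfolding path_def is_walk_def by (metis card_mono distinct_card)

lemma subpath: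
  assumes p: "path T xs" and ij: "i \<le> j" "j < length xs"
  shows "path T (take (Suc (j - i)) (drop i xs)) \<and> hd (take (Suc (j - i)) (drop i xs)) = xs ! i
    \<and> last (take (Suc (j - i)) (drop i xs)) = xs ! j \<and> length (take (Suc (j - i)) (drop i xs)) = Suc (j - i)"
proof -
  have w: "is_walk T (drop i xs)" using is_walk_drop p ij unfolding path_def by fastforce
  have "is_walk T (take (Suc (j - i)) (drop i xs))" using is_walk_take[OF w] by simp
  moreover have "distinct (take (Suc (j - i)) (drop i xs))" using p unfolding path_def by simp
  moreover have "hd (take (Suc (j - i)) (drop i xs)) = xs ! i" using ij by (simp add: hd_drop_conv_nth)
  moreover have "last (take (Suc (j - i)) (drop i xs)) = xs ! j"
    using ij last_take_Suc[of "j - i" "drop i xs"] by simp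
  moreover have "length (take (Suc (j - i)) (drop i xs)) = Suc (j - i)" using ij by simp
  ultimately show ?thesis unfolding path_def by blast
qed

locale tr =
  fixes T :: "'a graph"
  assumes g: "graph T" and nc: "\<not> has_cycle T"
begin

lemma chord:
  assumes p: "path T xs" and ij: "i < j" "j < length xs" and a: "adj T (xs ! i) (xs ! j)"
  shows "j = Suc i"
proof (rule ccontr)
  assume "j \<noteq> Suc i"
  then have j2: "j \<ge> i + 2" using ij by simp
  define c where "c = take (Suc (j - i)) (drop i xs)"
  have c: "path T c" "hd c = xs ! i" "last c = xs ! j" "length c = Suc (j - i)"
    using subpath[OF p, of i j] ij unfolding c_def by auto
  have "adj T (last c) (hd c)" using graph_sym[OF g a] c by simp
  then have "has_cycle T" unfolding has_cycle_def using c j2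
    by (intro exI[of _ c]) (auto simp: path_def)
  then show False using nc by simp
qed

lemma longest_path_exists:
  assumes fin: "finite (verts T)" and v: "v \<in> verts T"
  shows "\<exists>P. path T P \<and> (\<forall>Q. path T Q \<longrightarrow> length Q \<le> length P)"
proof -
  have "path T [v]" using v by (simp add: path_def)
  moreover have "\<forall>Q. path T Q \<longrightarrow> length Q < Suc (card (verts T))"
    using path_len[OF fin] by (simp add: le_imp_less_Suc)
  ultimately show ?thesis using ex_has_greatest_nat[of "path T" "[v]" length] by blast
qed

lemma hd_leaf:
  assumes P: "path T P" and lp: "\<forall>Q. path T Q \<longrightarrow> length Q \<le> length P" and l2: "length P \<ge> 2"
    and w: "adj T (hd P) w"
  shows "w = P ! 1"
proof -
  have ne: "P \<noteq> []" using l2 by auto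
  have hd0: "hd P = P ! 0" using ne by (simp add: hd_conv_nth)
  have wV: "w \<in> verts T" using graph_in[OF g w] by blast
  show ?thesis
  proof (cases "w \<in> set P")
    case False
    have "is_walk T (w # P)" using P wV graph_sym[OF g w] ne unfolding path_def by (simp add: is_walk_Cons)
    then have "path T (w # P)" using P False unfolding path_def by simp
    then show ?thesis using lp by fastforce
  next
    case True
    then obtain j where j: "j < length P" "P ! j = w" by (auto simp: in_set_conv_nth)
    have "j \<noteq> 0"
    proof
      assume "j = 0" then show False using j w hd0 graph_irr[OF g] by metis
    qed
    then have "j = Suc 0" using chord[OF P, of 0 j] j w hd0 by auto
    then show ?thesis using j by simp
  qed
qed

lemma path_rev: "path T P \<Longrightarrow> path T (rev P)"
  unfolding path_def using is_walk_rev[OF graph_symadj[OF g]] by auto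

lemma last_leaf:
  assumes P: "path T P" and lp: "\<forall>Q. path T Q \<longrightarrow> length Q \<le> length P" and l2: "length P \<ge> 2"
    and w: "adj T (last P) w"
  shows "w = rev P ! 1"
  using hd_leaf[OF path_rev[OF P], of w] lp l2 w by (simp add: hd_rev)

lemma full_path:
  assumes P: "path T P" and sp: "set P = verts T"
  shows "path_graph T"
  unfolding path_graph_def
proof (intro exI[of _ "nth P"] conjI)
  have cv: "card (verts T) = length P" using P sp distinct_card unfolding path_def by metis
  have "inj_on (nth P) {0..<length P}" using P inj_on_nth[of P "{0..<length P}"] unfolding path_def by auto
  moreover have "nth P ` {0..<length P} = set P"
  proof
    show "nth P ` {0..<length P} \<subseteq> set P" by auto
    show "set P \<subseteq> nth P ` {0..<length P}"
    proof
      fix x assume "x \<in> set P"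
      then obtain i where "i < length P" "P ! i = x" by (auto simp: in_set_conv_nth)
      then show "x \<in> nth P ` {0..<length P}" by force
    qed
  qed
  then have "nth P ` {0..<length P} = verts T" using sp by simp
  ultimately show "bij_betw (nth P) {0..<card (verts T)} (verts T)" using cv unfolding bij_betw_def by simp
  show "\<forall>i<card (verts T). \<forall>j<card (verts T). adj T (P ! i) (P ! j) = (i = Suc j \<or> j = Suc i)"
  proof (intro allI impI)
    fix i j assume ij: "i < card (verts T)" "j < card (verts T)"
    have w: "is_walk T P" using P unfolding path_def by simp
    show "adj T (P ! i) (P ! j) = (i = Suc j \<or> j = Suc i)"
    proof
      assume a: "adj T (P ! i) (P ! j)"
      consider "i < j" | "i = j" | "j < i" by linarith
      then show "i = Suc j \<or> j = Suc i"
      proof cases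
        case 1 then show ?thesis using chord[OF P 1] ij cv a by auto
      next
        case 2 then show ?thesis using a graph_irr[OF g] by simp
      next
        case 3 then show ?thesis using chord[OF P 3] ij cv graph_sym[OF g a] by auto
      qed
    next
      assume "i = Suc j \<or> j = Suc i"
      then show "adj T (P ! i) (P ! j)"
      proof
        assume "i = Suc j" then show ?thesis using walk_nth_adj[OF w, of j] ij cv graph_sym[OF g] by auto
      next
        assume "j = Suc i" then show ?thesis using walk_nth_adj[OF w, of i] ij cv by auto
      qed
    qed
  qed
qed

lemma crossing:
  "is_walk T xs \<Longrightarrow> hd xs \<notin> A \<Longrightarrow> last xs \<in> A \<Longrightarrow> \<exists>y p. y \<notin> A \<and> p \<in> A \<and> adj T y p"
proof (induction xs)
  case Nil then show ?case by (simp add: is_walk_def)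
next
  case (Cons x xs)
  show ?case
  proof (cases "xs = []")
    case True then show ?thesis using Cons by simp
  next
    case False
    then have w: "is_walk T xs" "adj T x (hd xs)" using Cons.prems by (auto simp: is_walk_Cons)
    show ?thesis
    proof (cases "hd xs \<in> A")
      case True then show ?thesis using w Cons.prems by auto
    next
      case f: False then show ?thesis using Cons.IH w Cons.prems False by auto
    qed
  qed
qed

lemma cyc0:
  assumes P: "path T P" and R: "path T R" and RP: "set R \<inter> set P = {hd R}" and lR: "length R \<ge> 2"
    and ki: "k < i" "i < length P" and Pi: "P ! i = hd R" and a: "adj T (last R) (P ! k)"
  shows "has_cycle T"
proof -
  define seg where "seg = take (Suc (i - 1 - k)) (drop k P)"
  have sg: "path T seg" "hd seg = P ! k" "last seg = P ! (i - 1)" "length seg = Suc (i - 1 - k)"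
    using subpath[OF P, of k "i - 1"] ki unfolding seg_def by auto
  have seg2: "seg = take (i - k) (drop k P)" using ki unfolding seg_def by (simp add: Suc_diff_Suc)
  have notin: "P ! i \<notin> set seg"
  proof
    assume "P ! i \<in> set seg"
    then obtain m where m: "m < length seg" "seg ! m = P ! i" by (auto simp: in_set_conv_nth)
    then have "m < i - k" using sg ki by simp
    then have "seg ! m = P ! (k + m)" using ki unfolding seg2 by simp
    then have "P ! (k + m) = P ! i" using m by simp
    moreover have "distinct P" using P unfolding path_def by simp
    moreover have "k + m < length P" using ki \<open>m < i - k\<close> by linarith
    ultimately have "k + m = i" using nth_eq_iff_index_eq[of P "k + m" i] ki by blast
    then show False using \<open>m < i - k\<close> by simp
  qed
  have sP: "set seg \<subseteq> set P" unfolding seg_def by (meson order_trans set_drop_subset set_take_subset)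
  have disj: "set R \<inter> set seg = {}"
  proof (rule ccontr)
    assume "set R \<inter> set seg \<noteq> {}"
    then obtain x where x: "x \<in> set R" "x \<in> set seg" by auto
    then have "x \<in> set R \<inter> set P" using sP by auto
    then have "x = hd R" using RP by simp
    then show False using x(2) notin Pi by simp
  qed
  have Rne: "R \<noteq> []" and segne: "seg \<noteq> []" using lR sg by auto
  define c where "c = R @ seg"
  have "is_walk T c" unfolding c_def
    using is_walk_append[of T R seg] R sg a unfolding path_def by simp
  moreover have "distinct c" using R sg disj unfolding c_def path_def by simp
  moreover have "length c \<ge> 3" using lR sg unfolding c_def by simp
  moreover have "adj T (last c) (hd c)"
  proof -
    have "last c = P ! (i - 1)" "hd c = P ! i" using sg Rne segne Pi unfolding c_def by auto
    moreover have "adj T (P ! (i - 1)) (P ! Suc (i - 1))"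
      using walk_nth_adj[of T P "i - 1"] P ki unfolding path_def by simp
    ultimately show ?thesis using ki by simp
  qed
  ultimately show ?thesis unfolding has_cycle_def by blast
qed

lemma cyc:
  assumes P: "path T P" and R: "path T R" and RP: "set R \<inter> set P = {hd R}" and lR: "length R \<ge> 2"
    and w: "w \<in> set P" "w \<noteq> hd R" and a: "adj T (last R) w"
  shows "has_cycle T"
proof -
  have "hd R \<in> set P" using RP by blast
  then obtain i where i: "i < length P" "P ! i = hd R" by (auto simp: in_set_conv_nth)
  obtain k where k: "k < length P" "P ! k = w" using w by (auto simp: in_set_conv_nth)
  have "k \<noteq> i" using i k w by auto
  then consider "k < i" | "i < k" by linarith
  then show ?thesis
  proof cases
    case 1 then show ?thesis using cyc0[OF P R RP lR 1 i(1)] i k a by simp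
  next
    case 2
    have P': "path T (rev P)" using path_rev[OF P] .
    have "set R \<inter> set (rev P) = {hd R}" using RP by simp
    moreover have "length P - Suc k < length P - Suc i" "length P - Suc i < length (rev P)" using 2 k by auto
    moreover have "rev P ! (length P - Suc i) = hd R" using i by (simp add: rev_nth)
    moreover have "rev P ! (length P - Suc k) = w" using k by (simp add: rev_nth)
    ultimately show ?thesis using cyc0[OF P' R, of "length P - Suc k" "length P - Suc i"] lR a by simp
  qed
qed

lemma third_leaf:
  assumes fin: "finite (verts T)" and P: "path T P" and y: "y \<in> verts T" "y \<notin> set P"
    and p: "p \<in> set P" "adj T p y"
  shows "\<exists>l. leaf T l \<and> l \<notin> set P"
proof -
  define F where "F = (\<lambda>Q. path T Q \<and> hd Q = y \<and> set Q \<inter> set P = {})"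
  have "F [y]" using y unfolding F_def path_def by simp
  moreover have "\<forall>Q. F Q \<longrightarrow> length Q < Suc (card (verts T))"
    using path_len[OF fin] unfolding F_def by (simp add: le_imp_less_Suc)
  ultimately obtain R' where R': "F R'" and mx: "\<forall>Q. F Q \<longrightarrow> length Q \<le> length R'"
    using ex_has_greatest_nat[of F "[y]" length] by blast
  have R'p: "path T R'" "hd R' = y" "set R' \<inter> set P = {}" using R' unfolding F_def by auto
  have R'ne: "R' \<noteq> []" using R'p unfolding path_def using is_walk_ne by blast
  define R where "R = p # R'"
  have pV: "p \<in> verts T" using graph_in[OF g p(2)] by blast
  have pR': "p \<notin> set R'" using R'p p by blast
  have R: "path T R" unfolding R_def path_def
    using R'p R'ne pV p pR' unfolding path_def by (simp add: is_walk_Cons)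
  have lR: "length R \<ge> 2" using R'ne unfolding R_def by (cases R') auto
  have RP: "set R \<inter> set P = {hd R}" using R'p p unfolding R_def by auto
  define l where "l = last R'"
  have lastR: "last R = l" using R'ne unfolding R_def l_def by simp
  have lnP: "l \<notin> set P" using R'p R'ne unfolding l_def by (meson disjoint_iff last_in_set)
  have lV: "l \<in> verts T" using R'p R'ne unfolding l_def path_def is_walk_def by auto
  have lnth: "R ! (length R - 1) = l" using lastR R'ne unfolding R_def by (simp add: last_conv_nth)
  have nb: "w = R ! (length R - 2)" if w: "adj T l w" for w
  proof (cases "w \<in> set R")
    case True
    then obtain j where j: "j < length R" "R ! j = w" by (auto simp: in_set_conv_nth)
    have "j \<noteq> length R - 1" using j w lnth graph_irr[OF g] by auto
    then have "j < length R - 1" using j by simp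
    moreover have "adj T (R ! j) (R ! (length R - 1))" using j lnth graph_sym[OF g w] by simp
    ultimately have "length R - 1 = Suc j" using chord[OF R, of j "length R - 1"] lR by simp
    then have "j = length R - 2" by arith
    then show ?thesis using j by simp
  next
    case False
    show ?thesis
    proof (cases "w \<in> set P")
      case True
      have "w \<noteq> hd R" using False R by (auto simp: R_def)
      then have "has_cycle T" using cyc[OF P R RP lR True] w lastR by simp
      then show ?thesis using nc by simp
    next
      case wP: False
      have wV: "w \<in> verts T" using graph_in[OF g w] by blast
      have "is_walk T (R' @ [w])" using R'p w wV l_def unfolding path_def
        by (intro is_walk_append) auto
      moreover have "distinct (R' @ [w])" using R'p False unfolding path_def R_def by simp
      ultimately have "F (R' @ [w])" using R'p R'ne wP unfolding F_def path_def by auto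
      then show ?thesis using mx by fastforce
    qed
  qed
  have "leaf T l" unfolding leaf_def using lV nb by metis
  then show ?thesis using lnP by blast
qed

lemma three_leaves:
  assumes fin: "finite (verts T)" and c: "connected T" and np: "\<not> path_graph T"
  shows "\<exists>a b c. leaf T a \<and> leaf T b \<and> leaf T c \<and> a \<noteq> b \<and> a \<noteq> c \<and> b \<noteq> c"
proof -
  obtain v where v: "v \<in> verts T" using c unfolding connected_def by blast
  obtain P where P: "path T P" and lp: "\<forall>Q. path T Q \<longrightarrow> length Q \<le> length P"
    using longest_path_exists[OF fin v] by blast
  have Pne: "P \<noteq> []" using P unfolding path_def using is_walk_ne by blast
  have sPV: "set P \<subseteq> verts T" using P unfolding path_def is_walk_def by simp
  have "set P \<noteq> verts T" using full_path[OF P] np by blast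
  then obtain x where x: "x \<in> verts T" "x \<notin> set P" using sPV by blast
  have hPV: "hd P \<in> verts T" using sPV Pne hd_in_set by blast
  obtain xs where xs: "is_walk T xs" "hd xs = x" "last xs = hd P"
    using connected_walks[OF c] x hPV by blast
  obtain y p where yp: "y \<notin> set P" "p \<in> set P" "adj T y p"
    using crossing[OF xs(1), of "set P"] xs x Pne by auto
  have yV: "y \<in> verts T" using graph_in[OF g yp(3)] by blast
  have pV: "p \<in> verts T" using graph_in[OF g yp(3)] by blast
  have py: "adj T p y" using graph_sym[OF g yp(3)] .
  have "path T [p, y]" using yp pV yV py unfolding path_def by (auto simp: is_walk_Cons2)
  then have l2: "length P \<ge> 2" using lp by fastforce
  have lh: "leaf T (hd P)" unfolding leaf_def using hPV hd_leaf[OF P lp l2] by metis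
  have lPV: "last P \<in> verts T" using sPV Pne last_in_set by blast
  have ll: "leaf T (last P)" unfolding leaf_def using lPV last_leaf[OF P lp l2] by metis
  have "hd P \<noteq> last P"
  proof
    assume "hd P = last P"
    then have "P ! 0 = P ! (length P - 1)" using Pne by (simp add: hd_conv_nth last_conv_nth)
    moreover have "distinct P" using P unfolding path_def by simp
    moreover have "0 < length P" "length P - 1 < length P" using l2 by auto
    ultimately have "0 = length P - 1" using nth_eq_iff_index_eq[of P 0 "length P - 1"] by blast
    then show False using l2 by simp
  qed
  moreover obtain l where "leaf T l" "l \<notin> set P" using third_leaf[OF fin P yV yp(1) yp(2) py] by blast
  moreover have "hd P \<in> set P" "last P \<in> set P" using Pne by auto
  ultimately show ?thesis using lh ll by metis
qed

end


lemma mg_intro: "is_dist X (dist X) \<Longrightarrow> symadj X \<Longrightarrow> mg X"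
  by (simp add: mg_def)

lemma MMD_mmd: "graph G \<Longrightarrow> MMD G u v \<longleftrightarrow> mmd G u v"
  unfolding MMD_def mmd_def maximally_distant_def md_def graph_def by blast

lemma G_facts:
  assumes g: "graph G" and c: "connected G" and c2: "card (verts G) \<ge> 2"
  shows "finite (verts G)" "is_dist G (dist G)" "symadj G" "hasnb G" "\<exists>a b. mmd G a b"
proof -
  show fin: "finite (verts G)" using g unfolding graph_def by blast
  show d: "is_dist G (dist G)" using connected_is_dist[OF c] .
  show s: "symadj G" using graph_symadj[OF g] .
  have two: "\<exists>y\<in>verts G. y \<noteq> x" if "x \<in> verts G" for x
  proof (rule ccontr)
    assume "\<not> (\<exists>y\<in>verts G. y \<noteq> x)"
    then have "verts G \<subseteq> {x}" by blast
    then have "card (verts G) \<le> 1" using card_mono[of "{x}" "verts G"] by simp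
    then show False using c2 by simp
  qed
  show "hasnb G" unfolding hasnb_def
  proof
    fix x assume x: "x \<in> verts G"
    obtain y where "y \<in> verts G" "y \<noteq> x" using two x by blast
    then obtain x' where "x' \<in> verts G" "adj G x x'" using is_dist_D2[OF d x, of y] by auto
    then show "\<exists>w\<in>verts G. adj G x w \<and> w \<noteq> x" using graph_irr[OF g] by metis
  qed
  interpret mg G using mg_intro[OF d s] .
  obtain a0 where a0: "a0 \<in> verts G" using c unfolding connected_def by blast
  obtain b0 where b0: "b0 \<in> verts G" "b0 \<noteq> a0" using two a0 by blast
  have "(a0, b0) \<in> verts G \<times> verts G" using a0 b0 by simp
  then obtain pr where pr: "pr \<in> verts G \<times> verts G" "\<forall>q\<in>verts G \<times> verts G. (\<lambda>(a, b). D a b) q \<le> (\<lambda>(a, b). D a b) pr"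
    using fin_argmax[of "verts G \<times> verts G" "(a0, b0)" "\<lambda>(a, b). D a b"] fin by blast
  obtain a b where ab: "pr = (a, b)" by (cases pr) auto
  have abV: "a \<in> verts G" "b \<in> verts G" using pr ab by auto
  have mx: "D x y \<le> D a b" if "x \<in> verts G" "y \<in> verts G" for x y using pr ab that by auto
  have "D a0 b0 > 0" using Dz a0 b0 by auto
  then have "D a b > 0" using mx[OF a0 b0(1)] by simp
  then have "a \<noteq> b" using abV by auto
  moreover have "md G a b" unfolding md_def using mx abV by auto
  moreover have "md G b a" unfolding md_def
  proof (intro ballI impI)
    fix w assume "w \<in> verts G" "adj G b w"
    then have "D w a \<le> D a b" using mx abV by blast
    then show "D w a \<le> D b a" using Dsym[OF abV] by simp
  qed
  ultimately show "\<exists>a b. mmd G a b" using abV unfolding mmd_def by blast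
qed

lemma SR_uniq:
  assumes g: "graph G" and fin: "finite (verts G)" and md1: "max_degree (strong_resolving_graph G) = 1"
    and m: "mmd G a b" "mmd G a c"
  shows "b = c"
proof -
  let ?S = "strong_resolving_graph G"
  have vS: "verts ?S = {x \<in> verts G. \<exists>y. MMD G x y}" and aS: "adj ?S = MMD G"
    by (simp_all add: strong_resolving_graph_def verts_def adj_def)
  have "mmd G b a" "mmd G c a" using m by (simp_all add: mmd_sym)
  then have M: "MMD G a b" "MMD G a c" "MMD G b a" "MMD G c a" using m MMD_mmd[OF g] by simp_all
  have aV: "a \<in> verts ?S" using M vS unfolding MMD_def by auto
  have bV: "b \<in> verts ?S" "c \<in> verts ?S" using M vS unfolding MMD_def by auto
  have finS: "finite (verts ?S)" using fin vS by simp
  define A where "A = {y \<in> verts ?S. adj ?S a y}"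
  have "card A \<le> max_degree ?S" unfolding max_degree_def A_def using finS aV by simp
  then have "card A \<le> Suc 0" using md1 by simp
  moreover have "finite A" using finS unfolding A_def by simp
  moreover have "b \<in> A" "c \<in> A" using bV M aS unfolding A_def by auto
  ultimately show ?thesis using card_le_Suc0_iff_eq by blast
qed

lemma SR_two:
  assumes g: "graph G" and fin: "finite (verts G)" and md2: "max_degree (strong_resolving_graph G) \<ge> 2"
    and ex: "\<exists>a b. mmd G a b"
  shows "\<exists>a b c. mmd G a b \<and> mmd G a c \<and> b \<noteq> c"
proof -
  let ?S = "strong_resolving_graph G"
  have vS: "verts ?S = {x \<in> verts G. \<exists>y. MMD G x y}" and aS: "adj ?S = MMD G"
    by (simp_all add: strong_resolving_graph_def verts_def adj_def)
  have finS: "finite (verts ?S)" using fin vS by simp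
  have ne: "verts ?S \<noteq> {}" using ex vS MMD_mmd[OF g] unfolding mmd_def by auto
  let ?f = "\<lambda>x. card {y \<in> verts ?S. adj ?S x y}"
  have "max_degree ?S \<in> ?f ` verts ?S" unfolding max_degree_def using finS ne by simp
  then obtain a where a: "a \<in> verts ?S" "?f a \<ge> 2" using md2 by auto
  have "finite {y \<in> verts ?S. adj ?S a y}" using finS by simp
  moreover have "\<not> card {y \<in> verts ?S. adj ?S a y} \<le> Suc 0" using a(2) by simp
  ultimately have "\<not> (\<forall>b\<in>{y \<in> verts ?S. adj ?S a y}. \<forall>c\<in>{y \<in> verts ?S. adj ?S a y}. b = c)"
    using card_le_Suc0_iff_eq by blast
  then obtain b c where "b \<in> {y \<in> verts ?S. adj ?S a y}" "c \<in> {y \<in> verts ?S. adj ?S a y}" "b \<noteq> c"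
    by blast
  then show ?thesis using aS MMD_mmd[OF g] by auto
qed



lemma P1:
  assumes dG: "is_dist G (dist G)" and dH: "is_dist H (dist H)"
    and m: "mmd G g g'"
    and hp: "\<forall>h0\<in>verts H. \<exists>i j k. i \<noteq> h0 \<and> j \<noteq> k \<and> mmd H i j \<and> mmd H i k"
  shows "\<forall>v\<in>verts (G \<box> H). \<exists>a b c. a \<noteq> v \<and> b \<noteq> v \<and> c \<noteq> v \<and> b \<noteq> c
            \<and> mmd (G \<box> H) a b \<and> mmd (G \<box> H) a c"
proof
  fix v assume v: "v \<in> verts (G \<box> H)"
  obtain v1 v2 where e: "v = (v1, v2)" by (cases v) auto
  have v2: "v2 \<in> verts H" using v e by simp
  obtain i j k where ijk: "i \<noteq> v2" "j \<noteq> k" "mmd H i j" "mmd H i k" using hp v2 by blast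
  obtain g1 g2 where gg: "mmd G g1 g2" "g2 \<noteq> v1"
  proof (cases "g' = v1")
    case True
    then have "g \<noteq> v1" using m by (auto simp: mmd_def)
    then show ?thesis using that mmd_sym[OF m] by blast
  next
    case False then show ?thesis using that m by blast
  qed
  have "mmd (G \<box> H) (g1, i) (g2, j)" "mmd (G \<box> H) (g1, i) (g2, k)"
    using mmd_prod[OF dG dH gg(1)] ijk by auto
  then show "\<exists>a b c. a \<noteq> v \<and> b \<noteq> v \<and> c \<noteq> v \<and> b \<noteq> c \<and> mmd (G \<box> H) a b \<and> mmd (G \<box> H) a c"
    using e ijk gg by (intro exI[of _ "(g1, i)"] exI[of _ "(g2, j)"] exI[of _ "(g2, k)"]) auto
qed

lemma P2:
  assumes dG: "is_dist G (dist G)" and dH: "is_dist H (dist H)"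
    and m: "mmd G g g1" "mmd G g g2" "g1 \<noteq> g2"
    and hp: "\<forall>h0\<in>verts H. \<exists>i j. i \<noteq> h0 \<and> j \<noteq> h0 \<and> mmd H i j"
  shows "\<forall>v\<in>verts (G \<box> H). \<exists>a b c. a \<noteq> v \<and> b \<noteq> v \<and> c \<noteq> v \<and> b \<noteq> c
            \<and> mmd (G \<box> H) a b \<and> mmd (G \<box> H) a c"
proof
  fix v assume v: "v \<in> verts (G \<box> H)"
  obtain v1 v2 where e: "v = (v1, v2)" by (cases v) auto
  have v2: "v2 \<in> verts H" using v e by simp
  obtain i j where ij: "i \<noteq> v2" "j \<noteq> v2" "mmd H i j" using hp v2 by blast
  have "mmd (G \<box> H) (g, i) (g1, j)" "mmd (G \<box> H) (g, i) (g2, j)"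
    using mmd_prod[OF dG dH] m ij by auto
  then show "\<exists>a b c. a \<noteq> v \<and> b \<noteq> v \<and> c \<noteq> v \<and> b \<noteq> c \<and> mmd (G \<box> H) a b \<and> mmd (G \<box> H) a c"
    using e ij m by (intro exI[of _ "(g, i)"] exI[of _ "(g1, j)"] exI[of _ "(g2, j)"]) auto
qed

lemma breaker_prod:
  assumes dG: "is_dist G (dist G)" and sG: "symadj G" and fG: "finite (verts G)" and nG: "verts G \<noteq> {}"
    and dH: "is_dist H (dist H)" and sH: "symadj H" and fH: "finite (verts H)" and nH: "verts H \<noteq> {}"
    and cfg: "\<forall>v\<in>verts (G \<box> H). \<exists>a b c. a \<noteq> v \<and> b \<noteq> v \<and> c \<noteq> v \<and> b \<noteq> c
            \<and> mmd (G \<box> H) a b \<and> mmd (G \<box> H) a c"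
  shows "O_SR (G \<box> H) = Obreaker"
proof -
  have "mg (G \<box> H)" using mg_intro[OF is_dist_prod_dist[OF dG dH] symadj_prod[OF sG sH]] .
  then show ?thesis using mg.breaker_outcome[of "G \<box> H"] cfg fG fH nG nH by simp
qed

lemma K_hp: "n \<ge> 3 \<Longrightarrow> \<forall>h0\<in>verts (K n). \<exists>i j k. i \<noteq> h0 \<and> j \<noteq> k \<and> mmd (K n) i j \<and> mmd (K n) i k"
proof
  fix h0 assume n: "n \<ge> 3" and "h0 \<in> verts (K n)"
  show "\<exists>i j k. i \<noteq> h0 \<and> j \<noteq> k \<and> mmd (K n) i j \<and> mmd (K n) i k"
  proof (cases "h0 = 0")
    case True then show ?thesis using n mmd_K[of 1 n 0] mmd_K[of 1 n 2] by (intro exI[of _ 1] exI[of _ 0] exI[of _ 2]) auto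
  next
    case False then show ?thesis using n mmd_K[of 0 n 1] mmd_K[of 0 n 2] by (intro exI[of _ 0] exI[of _ 1] exI[of _ 2]) auto
  qed
qed

lemma C_odd_hp:
  assumes n: "n = 2 * k + 1" "k \<ge> 1"
  shows "\<forall>h0\<in>verts (C n). \<exists>i j k. i \<noteq> h0 \<and> j \<noteq> k \<and> mmd (C n) i j \<and> mmd (C n) i k"
proof
  fix h0 assume "h0 \<in> verts (C n)"
  have n3: "n \<ge> 3" and nd: "n div 2 = k" using n by auto
  have c1: "cd n k 0 = k" "cd n k (2 * k) = k" "cd n 0 k = k" "cd n 0 (k + 1) = k"
    using n by (auto simp: cd_def dd_def)
  show "\<exists>i j k'. i \<noteq> h0 \<and> j \<noteq> k' \<and> mmd (C n) i j \<and> mmd (C n) i k'"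
  proof (cases "h0 = 0")
    case True
    have "mmd (C n) k 0" "mmd (C n) k (2 * k)" using mmd_C_half[OF n3] c1 nd n by auto
    then show ?thesis using True n by (intro exI[of _ k] exI[of _ 0] exI[of _ "2 * k"]) auto
  next
    case False
    have "mmd (C n) 0 k" "mmd (C n) 0 (k + 1)" using mmd_C_half[OF n3] c1 nd n by auto
    then show ?thesis using False by (intro exI[of _ 0] exI[of _ k] exI[of _ "k + 1"]) auto
  qed
qed

lemma C_even_hp:
  assumes n: "n = 2 * k" "k \<ge> 2"
  shows "\<forall>h0\<in>verts (C n). \<exists>i j. i \<noteq> h0 \<and> j \<noteq> h0 \<and> mmd (C n) i j"
proof
  fix h0 assume "h0 \<in> verts (C n)"
  have n3: "n \<ge> 3" and nd: "n div 2 = k" using n by auto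
  have c1: "cd n 0 k = k" "cd n 1 (k + 1) = k"
    using n by (auto simp: cd_def dd_def)
  have m: "mmd (C n) 0 k" "mmd (C n) 1 (k + 1)" using mmd_C_half[OF n3] c1 nd n by auto
  show "\<exists>i j. i \<noteq> h0 \<and> j \<noteq> h0 \<and> mmd (C n) i j"
  proof (cases "h0 = 0 \<or> h0 = k")
    case True then show ?thesis using m n by (intro exI[of _ 1] exI[of _ "k + 1"]) auto
  next
    case False then show ?thesis using m by (intro exI[of _ 0] exI[of _ k]) auto
  qed
qed



lemma tree_hp:
  assumes t: "tree T" and np: "\<not> path_graph T"
  shows "\<forall>h0\<in>verts T. \<exists>i j k. i \<noteq> h0 \<and> j \<noteq> k \<and> mmd T i j \<and> mmd T i k"
proof
  fix h0 assume "h0 \<in> verts T"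
  have g: "graph T" and c: "connected T" and nc: "\<not> has_cycle T" using t unfolding tree_def by auto
  have fin: "finite (verts T)" using g unfolding graph_def by blast
  have d: "is_dist T (dist T)" using connected_is_dist[OF c] .
  interpret tr T using g nc by (simp add: tr_def)
  obtain a b c where l: "leaf T a" "leaf T b" "leaf T c" "a \<noteq> b" "a \<noteq> c" "b \<noteq> c"
    using three_leaves[OF fin c np] by blast
  have m: "mmd T x y" if "x \<in> {a, b, c}" "y \<in> {a, b, c}" "x \<noteq> y" for x y
    using leaf_mmd[OF d] l that by auto
  show "\<exists>i j k. i \<noteq> h0 \<and> j \<noteq> k \<and> mmd T i j \<and> mmd T i k"
  proof (cases "h0 = a")
    case True then show ?thesis using m l by (intro exI[of _ b] exI[of _ a] exI[of _ c]) auto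
  next
    case False then show ?thesis using m l by (intro exI[of _ a] exI[of _ b] exI[of _ c]) auto
  qed
qed

theorem mainTheorem15:
  fixes G :: "'a graph"
  assumes "graph G" and "connected G" and "card (verts G) \<ge> 2"
  shows "(\<forall>n\<ge>3. O_SR (G \<box> K n) = Obreaker)
    \<and> (\<forall>n\<ge>3. (even n \<and> max_degree (strong_resolving_graph G) = 1 \<longrightarrow> O_SR (G \<box> C n) = Omaker)
            \<and> ((odd n \<or> max_degree (strong_resolving_graph G) \<ge> 2) \<longrightarrow> O_SR (G \<box> C n) = Obreaker))
    \<and> (\<forall>T :: 'b graph. tree T \<and> \<not> path_graph T \<longrightarrow> O_SR (G \<box> T) = Obreaker)"
proof -
  note gf = G_facts[OF assms]
  have fG: "finite (verts G)" and dG: "is_dist G (dist G)" and sG: "symadj G" and nbG: "hasnb G"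
    using gf by auto
  have nG: "verts G \<noteq> {}" using assms(2) unfolding connected_def by blast
  obtain g g' where m: "mmd G g g'" using gf by blast
  have partA: "\<forall>n\<ge>3. O_SR (G \<box> K n) = Obreaker"
  proof (intro allI impI)
    fix n :: nat assume n: "n \<ge> 3"
    show "O_SR (G \<box> K n) = Obreaker"
      by (rule breaker_prod[OF dG sG fG nG is_dist_K_dist symadj_K])
         (use n P1[OF dG is_dist_K_dist m K_hp[OF n]] in auto)
  qed
  have partB: "\<forall>n\<ge>3. (even n \<and> max_degree (strong_resolving_graph G) = 1 \<longrightarrow> O_SR (G \<box> C n) = Omaker)
            \<and> ((odd n \<or> max_degree (strong_resolving_graph G) \<ge> 2) \<longrightarrow> O_SR (G \<box> C n) = Obreaker)"
  proof (intro allI impI conjI)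
    fix n :: nat assume n: "n \<ge> 3"
    have dC: "is_dist (C n) (dist (C n))" using is_dist_C_dist[OF n] .
    have nC: "verts (C n) \<noteq> {}" using n by auto
    {
      assume h: "even n \<and> max_degree (strong_resolving_graph G) = 1"
      then obtain k where k: "n = 2 * k" by (auto elim: evenE)
      then have k2: "k \<ge> 2" using n by simp
      have mgX: "mg (G \<box> C n)" using mg_intro[OF is_dist_prod_dist[OF dG dC] symadj_prod[OF sG symadj_C]] .
      have uniq: "\<forall>a b c. mmd (G \<box> C n) a b \<and> mmd (G \<box> C n) a c \<longrightarrow> b = c"
      proof (intro allI impI)
        fix a b c assume abc: "mmd (G \<box> C n) a b \<and> mmd (G \<box> C n) a c"
        obtain a1 a2 b1 b2 c1 c2 where e: "a = (a1, a2)" "b = (b1, b2)" "c = (c1, c2)"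
          by (cases a, cases b, cases c) auto
        have r1: "mmd G a1 b1 \<and> mmd (C n) a2 b2" using mmd_prod_rev[OF dG dC nbG hasnb_C[OF n]] abc e by auto
        have r2: "mmd G a1 c1 \<and> mmd (C n) a2 c2" using mmd_prod_rev[OF dG dC nbG hasnb_C[OF n]] abc e by auto
        have "b1 = c1" using SR_uniq[OF assms(1) fG] h r1 r2 by blast
        moreover have "cd n a2 b2 = k" "cd n a2 c2 = k" using mmd_C_even[OF k k2] r1 r2 by auto
        then have "b2 = c2" using cd_even_uniq[OF k] r1 r2 by (auto simp: mmd_def)
        ultimately show "b = c" using e by simp
      qed
      show "O_SR (G \<box> C n) = Omaker" using mg.maker_outcome[OF mgX] uniq fG by simp
    }
    {
      assume h: "odd n \<or> max_degree (strong_resolving_graph G) \<ge> 2"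
      have cfg: "\<forall>v\<in>verts (G \<box> C n). \<exists>a b c. a \<noteq> v \<and> b \<noteq> v \<and> c \<noteq> v \<and> b \<noteq> c
            \<and> mmd (G \<box> C n) a b \<and> mmd (G \<box> C n) a c"
      proof (cases "odd n")
        case True
        then obtain k where k: "n = 2 * k + 1" by (auto elim: oddE)
        then have "k \<ge> 1" using n by simp
        then show ?thesis using P1[OF dG dC m C_odd_hp[OF k]] by simp
      next
        case False
        then obtain k where k: "n = 2 * k" by (auto elim: evenE)
        then have k2: "k \<ge> 2" using n by simp
        have "max_degree (strong_resolving_graph G) \<ge> 2" using h False by simp
        then obtain a b c where abc: "mmd G a b" "mmd G a c" "b \<noteq> c"
          using SR_two[OF assms(1) fG] gf by blast
        show ?thesis using P2[OF dG dC abc C_even_hp[OF k k2]] .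
      qed
      show "O_SR (G \<box> C n) = Obreaker"
        by (rule breaker_prod[OF dG sG fG nG dC symadj_C]) (use nC cfg in auto)
    }
  qed
  have partC: "\<forall>T :: 'b graph. tree T \<and> \<not> path_graph T \<longrightarrow> O_SR (G \<box> T) = Obreaker"
  proof (intro allI impI)
    fix T :: "'b graph" assume t: "tree T \<and> \<not> path_graph T"
    have g: "graph T" and c: "connected T" using t unfolding tree_def by auto
    have fin: "finite (verts T)" using g unfolding graph_def by blast
    have d: "is_dist T (dist T)" using connected_is_dist[OF c] .
    have ne: "verts T \<noteq> {}" using c unfolding connected_def by blast
    show "O_SR (G \<box> T) = Obreaker"
      by (rule breaker_prod[OF dG sG fG nG d graph_symadj[OF g] fin ne])
         (use P1[OF dG d m tree_hp] t in auto)
  qed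
  show ?thesis using partA partB partC by blast
qed



end
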